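(* Let $\mathbf G_n$ be distributed either as the Poisson random factor graph $\mathbf G_n(d,\Omega,k,\Psi,\rho)$ or as the percolated regular factor graph $\mathbf G^\varepsilon_{n,\mathrm{reg}}(d,\Omega,k,\Psi,\rho)$ (for a fixed $\varepsilon>0$). If $$\lim_{\ell\to\infty}\limsup_{n\to\infty}\frac1n\sum_{i=1}^n\sum_{\sigma\in\Omega^n}\mathbb E\Big[\mu_{\mathbf G_n}(\sigma)\left\|\mu_{\mathbf G_n,x_i}-\mu_{\mathbf G_n,x_i}[\,\cdot\,|\nabla_\ell(\mathbf G_n,x_i,\sigma)]\right\|_{TV}\Big]=0,$$ then $$\lim_{n\to\infty}\frac1{n^2}\sum_{i,j=1}^n\mathbb E\left\|\mu_{\mathbf G_n,x_i,x_j}-\mu_{\mathbf G_n,x_i}\otimes\mu_{\mathbf G_n,x_j}\right\|_{TV}=0.$$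
   Context: Factor graphs: Fix a finite set $\Omega$ of spins. A factor graph $G$ has variable nodes $V(G)$, constraint nodes $F(G)$, for each $a\in F(G)$ an ordered tuple $\partial a$ of variable nodes and a weight function $\psi_a:\Omega^{|\partial a|}\to(0,\infty)$; Gibbs measure $\mu_G(\sigma)=Z_G^{-1}\prod_a\psi_a(\sigma(\partial a))$ on $\Omega^{V(G)}$. $\mu_{G,x}$, $\mu_{G,x,y}$ are one- and two-point marginals, and $\mu_{G,x}[\cdot|E]$ the marginal of $x$ under $\mu_G$ conditioned on an event $E\subset\Omega^{V(G)}$. The bipartite graph on $V(G)\cup F(G)$ joining $a$ with the variables in $\partial a$ induces a shortest-path metric. For $x\in V(G)$, $\ell\geq1$, $\sigma\in\Omega^{V(G)}$, $\nabla_\ell(G,x,\sigma)$ is the set of $\tau\in\Omega^{V(G)}$ with $\tau(y)=\sigma(y)$ for all variable nodes $y$ at distance greater than $\ell$ from $x$. Models: $d$ fixed (a positive integer for the regular model, $d>0$ for the Poisson model), $k\geq3$, $\Psi$ a finite nonempty set of functions $\Omega^k\to(0,\infty)$, $\rho$ a distribution on $\Psi$, all fixed as $n\to\infty$. Poisson model $\mathbf G_n(d,\Omega,k,\Psi,\rho)$: variable nodes $x_1,\ldots,x_n$, $m\sim\mathrm{Po}(dn/k)$ constraint nodes, each independently with $\psi_{a_i}\sim\rho$ and $\partial a_i$ uniform in $\{x_1,\ldots,x_n\}^k$. For $\psi\in\Psi$, $J\subset[k]$ let $\psi^J((\sigma_j)_{j\in J})=|\Omega|^{|J|-k}\sum_{(\sigma_j)_{j\notin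 J}}\psi(\sigma_1,\ldots,\sigma_k)$. Percolated regular model $\mathbf G^\varepsilon_{n,\mathrm{reg}}$: (REG1) $m\sim\mathrm{Po}(dn/k)$; (REG2) independently for $i\in[m]$, $J_i\subset[k]$ includes each element with probability $1-\varepsilon$ independently, $\psi_i\sim\rho$, and $a_i$ gets weight $\psi_i^{J_i}$ and $|J_i|$ ordered neighbour slots; (REG3) if $\sum_i|J_i|>dn$ start over, otherwise choose the neighbour tuples uniformly subject to every variable node having degree at most $d$. *)

theory Defs
  imports "HOL-Probability.Probability"
begin

text \<open>Factor graphs on the variable nodes 0,...,n-1 (the paper's x_1,...,x_n). A factor graph is the list of its
  constraint nodes; each constraint node is a pair (weight function, ordered tuple of
  neighbouring variable nodes). Weight functions take the list of spins of the
  neighbours as argument.\<close>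

type_synonym 'o factor = "('o list \<Rightarrow> real) \<times> nat list"
type_synonym 'o fgraph = "'o factor list"

definition configs :: "nat \<Rightarrow> (nat \<Rightarrow> 'o::finite) set" where
  "configs n = ({..<n} \<rightarrow>\<^sub>E (UNIV :: 'o set))"

definition fg_weight :: "'o fgraph \<Rightarrow> (nat \<Rightarrow> 'o) \<Rightarrow> real" where
  "fg_weight G \<sigma> = prod_list (map (\<lambda>(\<psi>, vs). \<psi> (map \<sigma> vs)) G)"

definition partition_fn :: "nat \<Rightarrow> 'o::finite fgraph \<Rightarrow> real" where
  "partition_fn n G = (\<Sum>\<sigma>\<in>configs n. fg_weight G \<sigma>)"

definition gibbs :: "nat \<Rightarrow> 'o::finite fgraph \<Rightarrow> (nat \<Rightarrow> 'o) \<Rightarrow> real" where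
  "gibbs n G \<sigma> = (if \<sigma> \<in> configs n then fg_weight G \<sigma> / partition_fn n G else 0)"

definition marg1 :: "nat \<Rightarrow> 'o::finite fgraph \<Rightarrow> nat \<Rightarrow> 'o \<Rightarrow> real" where
  "marg1 n G x \<omega> = (\<Sum>\<sigma>\<in>{\<sigma>\<in>configs n. \<sigma> x = \<omega>}. gibbs n G \<sigma>)"

definition marg2 :: "nat \<Rightarrow> 'o::finite fgraph \<Rightarrow> nat \<Rightarrow> nat \<Rightarrow> 'o \<times> 'o \<Rightarrow> real" where
  "marg2 n G x y = (\<lambda>(\<omega>, \<omega>'). \<Sum>\<sigma>\<in>{\<sigma>\<in>configs n. \<sigma> x = \<omega> \<and> \<sigma> y = \<omega>'}. gibbs n G \<sigma>)"

definition cond_marg1 ::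
  "nat \<Rightarrow> 'o::finite fgraph \<Rightarrow> nat \<Rightarrow> (nat \<Rightarrow> 'o) set \<Rightarrow> 'o \<Rightarrow> real" where
  "cond_marg1 n G x E \<omega> =
     (\<Sum>\<sigma>\<in>{\<sigma>\<in>configs n \<inter> E. \<sigma> x = \<omega>}. gibbs n G \<sigma>) / (\<Sum>\<sigma>\<in>configs n \<inter> E. gibbs n G \<sigma>)"

definition tv_dist :: "('a::finite \<Rightarrow> real) \<Rightarrow> ('a \<Rightarrow> real) \<Rightarrow> real" where
  "tv_dist p q = (\<Sum>a\<in>UNIV. \<bar>p a - q a\<bar>) / 2"

definition fg_edges :: "'o fgraph \<Rightarrow> (nat + nat) rel" where
  "fg_edges G = {(Inl v, Inr a) | v a. a < length G \<and> v \<in> set (snd (G ! a))}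
              \<union> {(Inr a, Inl v) | v a. a < length G \<and> v \<in> set (snd (G ! a))}"

definition dist_le :: "'o fgraph \<Rightarrow> nat \<Rightarrow> nat \<Rightarrow> nat \<Rightarrow> bool" where
  "dist_le G l x y \<longleftrightarrow> (\<exists>j\<le>l. (Inl x, Inl y) \<in> (fg_edges G) ^^ j)"

definition nabla :: "nat \<Rightarrow> 'o::finite fgraph \<Rightarrow> nat \<Rightarrow> nat \<Rightarrow> (nat \<Rightarrow> 'o) \<Rightarrow> (nat \<Rightarrow> 'o) set" where
  "nabla n G l x \<sigma> = {\<tau>\<in>configs n. \<forall>y<n. \<not> dist_le G l x y \<longrightarrow> \<tau> y = \<sigma> y}"

abbreviation iid_list :: "nat \<Rightarrow> 'a pmf \<Rightarrow> 'a list pmf" where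
  "iid_list m p \<equiv> replicate_pmf m p"

definition poisson_factor :: "nat \<Rightarrow> nat \<Rightarrow> ('o list \<Rightarrow> real) pmf \<Rightarrow> 'o factor pmf" where
  "poisson_factor n k \<rho> = do {
      \<psi> \<leftarrow> \<rho>;
      vs \<leftarrow> pmf_of_set {vs. length vs = k \<and> set vs \<subseteq> {..<n}};
      return_pmf (\<psi>, vs) }"

definition poisson_model :: "real \<Rightarrow> nat \<Rightarrow> ('o list \<Rightarrow> real) pmf \<Rightarrow> nat \<Rightarrow> 'o fgraph pmf" where
  "poisson_model d k \<rho> n = do {
      m \<leftarrow> poisson_pmf (d * real n / real k);
      replicate_pmf m (poisson_factor n k \<rho>) }"

text \<open>psi^J, with J a subset of the (0-based) positions {0..<k}; the argument lists the
  values of the positions in J in increasing order.\<close>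
definition restrict_wt :: "nat \<Rightarrow> ('o::finite list \<Rightarrow> real) \<Rightarrow> nat set \<Rightarrow> 'o list \<Rightarrow> real" where
  "restrict_wt k \<psi> J ys =
     (\<Sum>\<tau>\<in>{\<tau>. length \<tau> = k \<and> nths \<tau> J = ys}. \<psi> \<tau>) / real (CARD('o)) ^ (k - card J)"

definition perc_data :: "real \<Rightarrow> nat \<Rightarrow> ('o list \<Rightarrow> real) pmf \<Rightarrow> (nat set \<times> ('o list \<Rightarrow> real)) pmf" where
  "perc_data \<epsilon> k \<rho> = do {
      bs \<leftarrow> replicate_pmf k (bernoulli_pmf (1 - \<epsilon>));
      \<psi> \<leftarrow> \<rho>;
      return_pmf ({j. j < k \<and> bs ! j}, \<psi>) }"

definition degree :: "nat list list \<Rightarrow> nat \<Rightarrow> nat" where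
  "degree vss v = length (filter (\<lambda>u. u = v) (concat vss))"

definition reg_tuples :: "real \<Rightarrow> nat \<Rightarrow> nat list \<Rightarrow> nat list list set" where
  "reg_tuples d n ls = {vss. length vss = length ls \<and>
        (\<forall>i<length ls. length (vss ! i) = ls ! i \<and> set (vss ! i) \<subseteq> {..<n}) \<and>
        (\<forall>v<n. real (degree vss v) \<le> d)}"

text \<open>(REG1)-(REG3); "start over" amounts to conditioning on the event sum |J_i| \<le> dn.\<close>
definition perc_reg_model ::
  "real \<Rightarrow> real \<Rightarrow> nat \<Rightarrow> ('o::finite list \<Rightarrow> real) pmf \<Rightarrow> nat \<Rightarrow> 'o fgraph pmf" where
  "perc_reg_model d \<epsilon> k \<rho> n = do {
      js \<leftarrow> cond_pmf (do { m \<leftarrow> poisson_pmf (d * real n / real k);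
                           replicate_pmf m (perc_data \<epsilon> k \<rho>) })
                     {js. real (sum_list (map (\<lambda>(J, _). card J) js)) \<le> d * real n};
      vss \<leftarrow> pmf_of_set (reg_tuples d n (map (\<lambda>(J, _). card J) js));
      return_pmf (map2 (\<lambda>(J, \<psi>) vs. (restrict_wt k \<psi> J, vs)) js vss) }"

end

theory Submission
  imports Defs
begin


lemma nabla_sub: "nabla n g l i \<sigma> \<subseteq> configs n"
  by (auto simp: nabla_def)

lemma nabla_refl: "\<sigma> \<in> configs n \<Longrightarrow> \<sigma> \<in> nabla n g l i \<sigma>"
  by (auto simp: nabla_def)

lemma nabla_sym: "\<tau> \<in> nabla n g l i \<sigma> \<Longrightarrow> \<sigma> \<in> configs n \<Longrightarrow> \<sigma> \<in> nabla n g l i \<tau>"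
  by (auto simp: nabla_def)

lemma nabla_eq: "\<tau> \<in> nabla n g l i \<sigma> \<Longrightarrow> nabla n g l i \<tau> = nabla n g l i \<sigma>"
  by (auto simp: nabla_def)

lemma nabla_far: "\<tau> \<in> nabla n g l i \<sigma> \<Longrightarrow> j < n \<Longrightarrow> \<not> dist_le g l i j \<Longrightarrow> \<tau> j = \<sigma> j"
  by (auto simp: nabla_def)

lemma finite_configs[simp]: "finite (configs n :: (nat \<Rightarrow> 'o::finite) set)"
  by (simp add: configs_def finite_PiE)

lemma gibbs_nonneg:
  assumes "\<And>\<sigma>. \<sigma> \<in> configs n \<Longrightarrow> fg_weight g \<sigma> \<ge> 0"
  shows "gibbs n g \<sigma> \<ge> (0::real)"
proof -
  have "partition_fn n g \<ge> 0" unfolding partition_fn_def using assms by (intro sum_nonneg) auto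
  then show ?thesis using assms by (auto simp: gibbs_def)
qed

lemma gibbs_sum_le:
  assumes "\<And>\<sigma>. \<sigma> \<in> configs n \<Longrightarrow> fg_weight g \<sigma> \<ge> 0"
  shows "(\<Sum>\<sigma>\<in>configs n. gibbs n (g::'o::finite fgraph) \<sigma>) \<le> 1"
proof -
  have "(\<Sum>\<sigma>\<in>configs n. gibbs n g \<sigma>) = (\<Sum>\<sigma>\<in>configs n. fg_weight g \<sigma>) / partition_fn n g"
    by (simp add: gibbs_def sum_divide_distrib)
  also have "\<dots> \<le> 1" by (simp add: partition_fn_def divide_le_eq_1)
  finally show ?thesis .
qed



lemma key_marg2:
  fixes g :: "'o::finite fgraph"
  assumes nn: "\<And>\<sigma>. gibbs n g \<sigma> \<ge> 0"
    and j: "j < n" and far: "\<not> dist_le g l i j"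
  shows "marg2 n g i j (s, t) =
    (\<Sum>\<sigma>\<in>{\<sigma>\<in>configs n. \<sigma> j = t}. gibbs n g \<sigma> * cond_marg1 n g i (nabla n g l i \<sigma>) s)"
proof -
  let ?C = "configs n :: (nat \<Rightarrow> 'o) set"
  let ?\<mu> = "gibbs n g"
  let ?N = "nabla n g l i"
  define Dn where "Dn \<sigma> = (\<Sum>\<tau>\<in>?N \<sigma>. ?\<mu> \<tau>)" for \<sigma>
  define R where "R \<sigma> \<tau> \<longleftrightarrow> \<sigma> j = t \<and> \<tau> \<in> ?N \<sigma> \<and> \<tau> i = s" for \<sigma> \<tau>
  have CN: "?C \<inter> ?N \<sigma> = ?N \<sigma>" for \<sigma> using nabla_sub by blast
  have finN: "finite (?N \<sigma>)" for \<sigma> using nabla_sub[of n g l i \<sigma>] finite_subset by fastforce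
  have "(\<Sum>\<sigma>\<in>{\<sigma>\<in>?C. \<sigma> j = t}. ?\<mu> \<sigma> * cond_marg1 n g i (?N \<sigma>) s)
      = (\<Sum>\<sigma>\<in>?C. \<Sum>\<tau>\<in>{\<tau>\<in>?C. R \<sigma> \<tau>}. ?\<mu> \<sigma> * ?\<mu> \<tau> / Dn \<sigma>)"
  proof -
    have "(\<Sum>\<sigma>\<in>{\<sigma>\<in>?C. \<sigma> j = t}. ?\<mu> \<sigma> * cond_marg1 n g i (?N \<sigma>) s)
       = (\<Sum>\<sigma>\<in>?C. if \<sigma> j = t then ?\<mu> \<sigma> * cond_marg1 n g i (?N \<sigma>) s else 0)"
      by (simp add: sum.inter_filter)
    also have "\<dots> = (\<Sum>\<sigma>\<in>?C. \<Sum>\<tau>\<in>{\<tau>\<in>?C. R \<sigma> \<tau>}. ?\<mu> \<sigma> * ?\<mu> \<tau> / Dn \<sigma>)"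
    proof (rule sum.cong[OF refl])
      fix \<sigma> assume "\<sigma> \<in> ?C"
      show "(if \<sigma> j = t then ?\<mu> \<sigma> * cond_marg1 n g i (?N \<sigma>) s else 0)
          = (\<Sum>\<tau>\<in>{\<tau>\<in>?C. R \<sigma> \<tau>}. ?\<mu> \<sigma> * ?\<mu> \<tau> / Dn \<sigma>)"
      proof (cases "\<sigma> j = t")
        case True
        have e: "{\<tau>\<in>?C. R \<sigma> \<tau>} = {\<tau>\<in>?C \<inter> ?N \<sigma>. \<tau> i = s}" using True by (auto simp: R_def)
        show ?thesis using True unfolding e cond_marg1_def CN Dn_def
          by (simp add: sum_distrib_left sum_divide_distrib)
      next
        case False
        then have e: "{\<tau>\<in>?C. R \<sigma> \<tau>} = {}" by (auto simp: R_def)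
        show ?thesis using False unfolding e by simp
      qed
    qed
    finally show ?thesis .
  qed
  also have "\<dots> = (\<Sum>\<tau>\<in>?C. \<Sum>\<sigma>\<in>{\<sigma>\<in>?C. R \<sigma> \<tau>}. ?\<mu> \<sigma> * ?\<mu> \<tau> / Dn \<sigma>)"
    by (rule sum.swap_restrict) auto
  also have "\<dots> = (\<Sum>\<tau>\<in>?C. if \<tau> i = s \<and> \<tau> j = t then ?\<mu> \<tau> else 0)"
  proof (rule sum.cong[OF refl])
    fix \<tau> assume tC: "\<tau> \<in> ?C"
    show "(\<Sum>\<sigma>\<in>{\<sigma>\<in>?C. R \<sigma> \<tau>}. ?\<mu> \<sigma> * ?\<mu> \<tau> / Dn \<sigma>) = (if \<tau> i = s \<and> \<tau> j = t then ?\<mu> \<tau> else 0)"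
    proof (cases "\<tau> i = s \<and> \<tau> j = t")
      case True
      have e: "{\<sigma>\<in>?C. R \<sigma> \<tau>} = ?N \<tau>"
      proof (intro set_eqI iffI)
        fix \<sigma> assume "\<sigma> \<in> {\<sigma>\<in>?C. R \<sigma> \<tau>}"
        then show "\<sigma> \<in> ?N \<tau>" using nabla_sym by (auto simp: R_def)
      next
        fix \<sigma> assume s: "\<sigma> \<in> ?N \<tau>"
        then have "\<sigma> \<in> ?C" using nabla_sub by blast
        moreover have "\<tau> \<in> ?N \<sigma>" using nabla_sym[OF s tC] .
        moreover have "\<sigma> j = \<tau> j" using nabla_far[OF s j far] .
        ultimately show "\<sigma> \<in> {\<sigma>\<in>?C. R \<sigma> \<tau>}" using True by (auto simp: R_def)
      qed
      have D: "Dn \<sigma> = Dn \<tau>" if "\<sigma> \<in> ?N \<tau>" for \<sigma>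
        unfolding Dn_def using nabla_eq[OF that] by simp
      have "(\<Sum>\<sigma>\<in>{\<sigma>\<in>?C. R \<sigma> \<tau>}. ?\<mu> \<sigma> * ?\<mu> \<tau> / Dn \<sigma>) = (\<Sum>\<sigma>\<in>?N \<tau>. ?\<mu> \<sigma> * ?\<mu> \<tau> / Dn \<tau>)"
        unfolding e by (rule sum.cong) (auto simp: D)
      also have "\<dots> = Dn \<tau> * ?\<mu> \<tau> / Dn \<tau>"
        unfolding Dn_def by (simp add: sum_distrib_right sum_divide_distrib)
      also have "\<dots> = ?\<mu> \<tau>"
      proof (cases "?\<mu> \<tau> = 0")
        case False
        have "?\<mu> \<tau> \<le> Dn \<tau>" unfolding Dn_def
          by (rule member_le_sum[OF nabla_refl[OF tC]]) (use nn finN in auto)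
        then have "Dn \<tau> \<noteq> 0" using False nn[of \<tau>] by linarith
        then show ?thesis by simp
      qed simp
      finally show ?thesis using True by simp
    next
      case False
      have e: "{\<sigma>\<in>?C. R \<sigma> \<tau>} = {}"
      proof (intro set_eqI iffI)
        fix \<sigma> assume "\<sigma> \<in> {\<sigma>\<in>?C. R \<sigma> \<tau>}"
        then have "\<sigma> j = t" "\<tau> \<in> ?N \<sigma>" "\<tau> i = s" by (auto simp: R_def)
        then have "\<tau> j = t" using nabla_far[OF _ j far] by metis
        then show "\<sigma> \<in> {}" using False \<open>\<tau> i = s\<close> by simp
      qed simp
      have z: "(if \<tau> i = s \<and> \<tau> j = t then ?\<mu> \<tau> else 0) = 0" using False by (simp only: if_False)
      show ?thesis unfolding e z by simp
    qed
  qed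
  also have "\<dots> = marg2 n g i j (s, t)"
    by (simp add: marg2_def sum.inter_filter)
  finally show ?thesis ..
qed



definition Aterm :: "nat \<Rightarrow> 'o::finite fgraph \<Rightarrow> nat \<Rightarrow> nat \<Rightarrow> real" where
  "Aterm n g l i = (\<Sum>\<sigma>\<in>configs n. gibbs n g \<sigma> * tv_dist (marg1 n g i) (cond_marg1 n g i (nabla n g l i \<sigma>)))"

lemma sum_group_configs:
  fixes h :: "(nat \<Rightarrow> 'o::finite) \<Rightarrow> real"
  shows "(\<Sum>t\<in>UNIV. \<Sum>\<sigma>\<in>{\<sigma>\<in>configs n. \<sigma> j = t}. h \<sigma>) = (\<Sum>\<sigma>\<in>configs n. h \<sigma>)"
  by (rule sum.group) auto

lemma tv_far:
  fixes g :: "'o::finite fgraph"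
  assumes nn: "\<And>\<sigma>. gibbs n g \<sigma> \<ge> 0"
    and j: "j < n" and far: "\<not> dist_le g l i j"
  shows "tv_dist (marg2 n g i j) (\<lambda>(\<omega>, \<omega>'). marg1 n g i \<omega> * marg1 n g j \<omega>') \<le> Aterm n g l i"
proof -
  let ?C = "configs n :: (nat \<Rightarrow> 'o) set"
  let ?\<mu> = "gibbs n g"
  let ?cm = "\<lambda>\<sigma>. cond_marg1 n g i (nabla n g l i \<sigma>)"
  let ?m = "marg1 n g i"
  have diff: "marg2 n g i j (s,t) - ?m s * marg1 n g j t =
      (\<Sum>\<sigma>\<in>{\<sigma>\<in>?C. \<sigma> j = t}. ?\<mu> \<sigma> * (?cm \<sigma> s - ?m s))" for s t
  proof -
    have "?m s * marg1 n g j t = (\<Sum>\<sigma>\<in>{\<sigma>\<in>?C. \<sigma> j = t}. ?\<mu> \<sigma> * ?m s)"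
      by (simp add: marg1_def sum_distrib_left sum_distrib_right mult.commute)
    then show ?thesis using key_marg2[OF nn j far, of s t]
      by (simp add: right_diff_distrib sum_subtractf)
  qed
  have "(\<Sum>p\<in>UNIV. \<bar>marg2 n g i j p - (case p of (\<omega>, \<omega>') \<Rightarrow> ?m \<omega> * marg1 n g j \<omega>')\<bar>)
      = (\<Sum>s\<in>UNIV. \<Sum>t\<in>UNIV. \<bar>marg2 n g i j (s,t) - ?m s * marg1 n g j t\<bar>)"
    by (simp add: sum.cartesian_product UNIV_Times_UNIV[symmetric] del: UNIV_Times_UNIV)
       (rule sum.cong[OF refl], auto split: prod.splits)
  also have "\<dots> \<le> (\<Sum>s\<in>UNIV. \<Sum>t\<in>UNIV. \<Sum>\<sigma>\<in>{\<sigma>\<in>?C. \<sigma> j = t}. ?\<mu> \<sigma> * \<bar>?cm \<sigma> s - ?m s\<bar>)"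
    unfolding diff
    by (intro sum_mono order.trans[OF sum_abs]) (simp add: abs_mult nn)
  also have "\<dots> = (\<Sum>t\<in>UNIV. \<Sum>\<sigma>\<in>{\<sigma>\<in>?C. \<sigma> j = t}. \<Sum>s\<in>UNIV. ?\<mu> \<sigma> * \<bar>?cm \<sigma> s - ?m s\<bar>)"
    by (subst sum.swap) (rule sum.cong[OF refl], rule sum.swap)
  also have "\<dots> = (\<Sum>\<sigma>\<in>?C. \<Sum>s\<in>UNIV. ?\<mu> \<sigma> * \<bar>?cm \<sigma> s - ?m s\<bar>)"
    by (rule sum_group_configs)
  also have "\<dots> = 2 * Aterm n g l i"
    unfolding Aterm_def tv_dist_def
    by (simp add: sum_distrib_left sum_distrib_right abs_minus_commute sum_divide_distrib[symmetric] mult.commute)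
  finally show ?thesis unfolding tv_dist_def by simp
qed

lemma tv_le1:
  fixes g :: "'o::finite fgraph"
  assumes nn: "\<And>\<sigma>. gibbs n g \<sigma> \<ge> 0" and s1: "(\<Sum>\<sigma>\<in>configs n. gibbs n g \<sigma>) \<le> 1"
  shows "tv_dist (marg2 n g i j) (\<lambda>(\<omega>, \<omega>'). marg1 n g i \<omega> * marg1 n g j \<omega>') \<le> 1"
proof -
  let ?C = "configs n :: (nat \<Rightarrow> 'o) set"
  let ?\<mu> = "gibbs n g"
  let ?S = "(\<Sum>\<sigma>\<in>?C. ?\<mu> \<sigma>)"
  have m1: "(\<Sum>s\<in>UNIV. marg1 n g x s) = ?S" for x
    unfolding marg1_def by (rule sum.group) auto
  have m2: "(\<Sum>p\<in>UNIV. marg2 n g i j p) = ?S"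
  proof -
    have "(\<Sum>p\<in>UNIV. marg2 n g i j p) = (\<Sum>p\<in>UNIV. \<Sum>\<sigma>\<in>{\<sigma>\<in>?C. (\<sigma> i, \<sigma> j) = p}. ?\<mu> \<sigma>)"
      by (rule sum.cong) (auto simp: marg2_def)
    also have "\<dots> = ?S" by (rule sum.group) auto
    finally show ?thesis .
  qed
  have nm: "marg1 n g x s \<ge> 0" for x s unfolding marg1_def by (intro sum_nonneg) (use nn in auto)
  have nm2: "marg2 n g i j p \<ge> 0" for p unfolding marg2_def by (cases p) (auto intro!: sum_nonneg simp: nn)
  have S0: "?S \<ge> 0" by (intro sum_nonneg) (use nn in auto)
  have "(\<Sum>p\<in>UNIV. \<bar>marg2 n g i j p - (case p of (\<omega>, \<omega>') \<Rightarrow> marg1 n g i \<omega> * marg1 n g j \<omega>')\<bar>)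
     \<le> (\<Sum>p\<in>UNIV. marg2 n g i j p + (case p of (\<omega>, \<omega>') \<Rightarrow> marg1 n g i \<omega> * marg1 n g j \<omega>'))"
  proof (intro sum_mono)
    fix p :: "'o \<times> 'o" 
    obtain a b where p: "p = (a,b)" by (cases p)
    have "0 \<le> marg1 n g i a * marg1 n g j b" using nm by simp
    then show "\<bar>marg2 n g i j p - (case p of (\<omega>, \<omega>') \<Rightarrow> marg1 n g i \<omega> * marg1 n g j \<omega>')\<bar>
     \<le> marg2 n g i j p + (case p of (\<omega>, \<omega>') \<Rightarrow> marg1 n g i \<omega> * marg1 n g j \<omega>')"
      using nm2[of p] unfolding p by simp
  qed
  also have "\<dots> = ?S + ?S * ?S"
  proof -
    have "(\<Sum>p\<in>UNIV. (case p of (\<omega>, \<omega>') \<Rightarrow> marg1 n g i \<omega> * marg1 n g j \<omega>'))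
        = (\<Sum>a\<in>UNIV. \<Sum>b\<in>UNIV. marg1 n g i a * marg1 n g j b)"
      by (simp add: sum.cartesian_product UNIV_Times_UNIV[symmetric] del: UNIV_Times_UNIV)
    also have "\<dots> = ?S * ?S" by (simp add: sum_product[symmetric] m1)
    finally show ?thesis by (simp add: sum.distrib m2)
  qed
  also have "\<dots> \<le> 2" using s1 S0 by (smt (verit) mult_left_le)
  finally show ?thesis unfolding tv_dist_def by simp
qed



definition fdeg :: "'o fgraph \<Rightarrow> nat \<Rightarrow> nat" where
  "fdeg g v = card {a. a < length g \<and> v \<in> set (snd (g ! a))}"

definition succs :: "'o fgraph \<Rightarrow> nat + nat \<Rightarrow> (nat + nat) set" where
  "succs g w = {z. (w, z) \<in> fg_edges g}"

lemma succs_Inl: "succs g (Inl v) = Inr ` {a. a < length g \<and> v \<in> set (snd (g ! a))}"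
  by (auto simp: succs_def fg_edges_def)

lemma succs_Inr: "succs g (Inr a) = (if a < length g then Inl ` set (snd (g ! a)) else {})"
  by (auto simp: succs_def fg_edges_def)

lemma succs_finite: "finite (succs g w)"
  by (cases w) (auto simp: succs_Inl succs_Inr)

lemma succs_card:
  assumes "\<And>a. a < length g \<Longrightarrow> length (snd (g ! a)) \<le> k" "\<And>v. fdeg g v \<le> D"
  shows "card (succs g w) \<le> k + D"
proof (cases w)
  case (Inl v)
  have "card (succs g w) \<le> fdeg g v" unfolding Inl succs_Inl fdeg_def by (rule card_image_le) simp
  then show ?thesis using assms(2)[of v] by linarith
next
  case (Inr a)
  show ?thesis
  proof (cases "a < length g")
    case True
    have "card (succs g w) \<le> card (set (snd (g ! a)))" unfolding Inr succs_Inr using True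
      by (simp add: card_image_le)
    also have "\<dots> \<le> length (snd (g ! a))" by (rule card_length)
    finally show ?thesis using assms(1)[OF True] by linarith
  qed (simp add: Inr succs_Inr)
qed

definition layer :: "'o fgraph \<Rightarrow> nat \<Rightarrow> nat \<Rightarrow> (nat + nat) set" where
  "layer g x j = {z. (Inl x, z) \<in> fg_edges g ^^ j}"

lemma layer_Suc: "layer g x (Suc j) = (\<Union>w\<in>layer g x j. succs g w)"
  by (auto simp: layer_def succs_def)

lemma layer_0: "layer g x 0 = {Inl x}"
  by (auto simp: layer_def)

lemma layer_bound:
  assumes "\<And>a. a < length g \<Longrightarrow> length (snd (g ! a)) \<le> k" "\<And>v. fdeg g v \<le> D"
  shows "finite (layer g x j) \<and> card (layer g x j) \<le> (k + D) ^ j"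
proof (induction j)
  case 0
  then show ?case by (simp add: layer_0)
next
  case (Suc j)
  have fin: "finite (layer g x (Suc j))" unfolding layer_Suc using Suc succs_finite by blast
  have "card (layer g x (Suc j)) \<le> (\<Sum>w\<in>layer g x j. card (succs g w))"
    unfolding layer_Suc by (rule card_UN_le) (use Suc in blast)
  also have "\<dots> \<le> (\<Sum>w\<in>layer g x j. k + D)" by (intro sum_mono succs_card[OF assms])
  also have "\<dots> \<le> (k + D) ^ j * (k + D)" using Suc by simp
  finally show ?case using fin by (simp add: mult.commute)
qed

lemma ball_bound:
  assumes "\<And>a. a < length g \<Longrightarrow> length (snd (g ! a)) \<le> k" "\<And>v. fdeg g v \<le> D"
  shows "card {y. dist_le g l x y} \<le> (l + 1) * (k + D + 1) ^ l"
proof -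
  let ?U = "\<Union>j\<in>{..l}. layer g x j"
  have finU: "finite ?U" using layer_bound[OF assms] by blast
  have sub: "Inl ` {y. dist_le g l x y} \<subseteq> ?U"
    by (auto simp: dist_le_def layer_def)
  have "card {y. dist_le g l x y} = card (Inl ` {y. dist_le g l x y} :: (nat + nat) set)"
    by (simp add: card_image)
  also have "\<dots> \<le> card ?U" by (rule card_mono[OF finU sub])
  also have "\<dots> \<le> (\<Sum>j\<in>{..l}. card (layer g x j))" by (rule card_UN_le) simp
  also have "\<dots> \<le> (\<Sum>j\<in>{..l}. (k + D + 1) ^ l)"
  proof (intro sum_mono)
    fix j assume "j \<in> {..l}"
    then have "(k + D) ^ j \<le> (k + D + 1) ^ j" "(k + D + 1) ^ j \<le> (k + D + 1) ^ l"
      by (auto intro: power_mono power_increasing)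
    then show "card (layer g x j) \<le> (k + D + 1) ^ l" using layer_bound[OF assms, of x j] by linarith
  qed
  finally show ?thesis by simp
qed



definition wnn :: "nat \<Rightarrow> 'o::finite fgraph \<Rightarrow> bool" where
  "wnn n g \<longleftrightarrow> (\<forall>\<sigma>\<in>configs n. fg_weight g \<sigma> \<ge> 0)"

lemma pmf_integrable_bounded:
  fixes f :: "'a \<Rightarrow> real"
  assumes "\<And>x. x \<in> set_pmf p \<Longrightarrow> \<bar>f x\<bar> \<le> B"
  shows "integrable (measure_pmf p) f"
  by (rule measure_pmf.integrable_const_bound[where B=B]) (auto simp: AE_measure_pmf_iff assms)

lemma tv_le1_gen:
  fixes p q :: "'a::finite \<Rightarrow> real"
  assumes "\<And>a. p a \<ge> 0" "\<And>a. q a \<ge> 0" "sum p UNIV \<le> 1" "sum q UNIV \<le> 1"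
  shows "tv_dist p q \<le> 1"
proof -
  have "(\<Sum>a\<in>UNIV. \<bar>p a - q a\<bar>) \<le> (\<Sum>a\<in>UNIV. p a + q a)"
    by (intro sum_mono) (use assms in \<open>auto simp: abs_le_iff\<close>)
  then show ?thesis using assms unfolding tv_dist_def by (simp add: sum.distrib)
qed

lemma tv_nonneg: "tv_dist p q \<ge> 0"
  unfolding tv_dist_def by (simp add: sum_nonneg)

context
  fixes n :: nat and g :: "'o::finite fgraph"
  assumes w: "wnn n g"
begin

lemma gnn: "gibbs n g \<sigma> \<ge> 0"
  using w gibbs_nonneg unfolding wnn_def by blast

lemma gsum: "(\<Sum>\<sigma>\<in>configs n. gibbs n g \<sigma>) \<le> 1"
  using w gibbs_sum_le unfolding wnn_def by blast

lemma gle1: "gibbs n g \<sigma> \<le> 1"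
proof (cases "\<sigma> \<in> configs n")
  case True
  have "gibbs n g \<sigma> \<le> (\<Sum>\<sigma>\<in>configs n. gibbs n g \<sigma>)"
    by (rule member_le_sum[OF True]) (auto simp: gnn)
  then show ?thesis using gsum by linarith
qed (simp add: gibbs_def)

lemma m1_nn: "marg1 n g i s \<ge> 0"
  unfolding marg1_def by (intro sum_nonneg) (simp add: gnn)

lemma m1_sum: "(\<Sum>s\<in>UNIV. marg1 n g i s) \<le> 1"
proof -
  have "(\<Sum>s\<in>UNIV. marg1 n g i s) = (\<Sum>\<sigma>\<in>configs n. gibbs n g \<sigma>)"
    unfolding marg1_def by (rule sum.group) auto
  then show ?thesis using gsum by simp
qed

lemma cm_nn: "cond_marg1 n g i E s \<ge> 0"
  unfolding cond_marg1_def by (intro divide_nonneg_nonneg sum_nonneg) (simp_all add: gnn)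

lemma cm_sum: "(\<Sum>s\<in>UNIV. cond_marg1 n g i E s) \<le> 1"
proof -
  let ?D = "(\<Sum>\<sigma>\<in>configs n \<inter> E. gibbs n g \<sigma>)"
  have "(\<Sum>s\<in>UNIV. cond_marg1 n g i E s) = (\<Sum>s\<in>UNIV. \<Sum>\<sigma>\<in>{\<sigma>\<in>configs n \<inter> E. \<sigma> i = s}. gibbs n g \<sigma>) / ?D"
    unfolding cond_marg1_def by (simp add: sum_divide_distrib)
  also have "(\<Sum>s\<in>UNIV. \<Sum>\<sigma>\<in>{\<sigma>\<in>configs n \<inter> E. \<sigma> i = s}. gibbs n g \<sigma>) = ?D"
    by (rule sum.group) auto
  finally show ?thesis by (simp add: divide_le_eq_1)
qed

lemma hterm_bound: "\<bar>gibbs n g \<sigma> * tv_dist (marg1 n g i) (cond_marg1 n g i E)\<bar> \<le> 1"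
proof -
  have "tv_dist (marg1 n g i) (cond_marg1 n g i E) \<le> 1"
    by (rule tv_le1_gen) (auto simp: m1_nn cm_nn m1_sum cm_sum)
  then show ?thesis using gnn[of \<sigma>] gle1[of \<sigma>] tv_nonneg[of "marg1 n g i" "cond_marg1 n g i E"]
    by (simp add: abs_mult mult_le_one)
qed

lemma Aterm_nn: "Aterm n g l i \<ge> 0"
  unfolding Aterm_def by (intro sum_nonneg mult_nonneg_nonneg gnn tv_nonneg)

lemma tv_row_bound:
  "(\<Sum>j<n. tv_dist (marg2 n g i j) (\<lambda>(\<omega>, \<omega>'). marg1 n g i \<omega> * marg1 n g j \<omega>'))
    \<le> real (card {j. j < n \<and> dist_le g l i j}) + real n * Aterm n g l i"
proof -
  have "(\<Sum>j<n. tv_dist (marg2 n g i j) (\<lambda>(\<omega>, \<omega>'). marg1 n g i \<omega> * marg1 n g j \<omega>'))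
      \<le> (\<Sum>j<n. (if dist_le g l i j then 1 else 0) + Aterm n g l i)"
  proof (intro sum_mono)
    fix j assume "j \<in> {..<n}"
    then show "tv_dist (marg2 n g i j) (\<lambda>(\<omega>, \<omega>'). marg1 n g i \<omega> * marg1 n g j \<omega>')
        \<le> (if dist_le g l i j then 1 else 0) + Aterm n g l i"
      using tv_le1[OF gnn gsum, of i j] tv_far[OF gnn _, of j l i] Aterm_nn[of l i]
      by (cases "dist_le g l i j") auto
  qed
  also have "\<dots> = real (card {j. j < n \<and> dist_le g l i j}) + real n * Aterm n g l i"
    by (simp add: sum.distrib sum.If_cases lessThan_def Collect_conj_eq Int_commute)
  finally show ?thesis .
qed

end



definition Bsum :: "nat \<Rightarrow> nat \<Rightarrow> 'o fgraph \<Rightarrow> real" where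
  "Bsum l n g = real (\<Sum>i<n. card {j. j < n \<and> dist_le g l i j})"

lemma Bsum_bounds: "0 \<le> Bsum l n g" "Bsum l n g \<le> real n ^ 2"
proof -
  have "(\<Sum>i<n. card {j. j < n \<and> dist_le g l i j}) \<le> (\<Sum>i<n. n)"
  proof (intro sum_mono)
    fix i assume "i \<in> {..<n}"
    have "card {j. j < n \<and> dist_le g l i j} \<le> card {..<n}" by (rule card_mono) auto
    then show "card {j. j < n \<and> dist_le g l i j} \<le> n" by simp
  qed
  then have "Bsum l n g \<le> real (n * n)" unfolding Bsum_def by (simp only: of_nat_le_iff) simp
  then show "Bsum l n g \<le> real n ^ 2" by (simp add: power2_eq_square)
qed (simp add: Bsum_def sum_nonneg)

lemma step_bound:
  fixes G :: "'o::finite fgraph pmf"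
  assumes w: "\<And>g. g \<in> set_pmf G \<Longrightarrow> wnn n g" and n: "n > 0"
  shows "(1 / real n ^ 2) * (\<Sum>i<n. \<Sum>j<n.
            measure_pmf.expectation G (\<lambda>g.
              tv_dist (marg2 n g i j) (\<lambda>(\<omega>, \<omega>'). marg1 n g i \<omega> * marg1 n g j \<omega>')))
     \<le> measure_pmf.expectation G (Bsum l n) / real n ^ 2 +
        (1 / real n) * (\<Sum>i<n. \<Sum>\<sigma>\<in>configs n.
                   measure_pmf.expectation G (\<lambda>g.
                     gibbs n g \<sigma> * tv_dist (marg1 n g i) (cond_marg1 n g i (nabla n g l i \<sigma>))))"
proof -
  let ?T = "\<lambda>i j g. tv_dist (marg2 n g i j) (\<lambda>(\<omega>, \<omega>'). marg1 n g i \<omega> * marg1 n g j \<omega>')"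
  let ?h = "\<lambda>i \<sigma> g. gibbs n g \<sigma> * tv_dist (marg1 n g i) (cond_marg1 n g i (nabla n g l i \<sigma>))"
  have iT: "integrable G (?T i j)" for i j
  proof (rule pmf_integrable_bounded[where B=1])
    fix g assume "g \<in> set_pmf G"
    then have wg: "wnn n g" by (rule w)
    show "\<bar>?T i j g\<bar> \<le> 1" using tv_le1[OF gnn[OF wg] gsum[OF wg], of i j] tv_nonneg
      by (simp add: abs_le_iff) (smt (verit) tv_nonneg)
  qed
  have ih: "integrable G (?h i \<sigma>)" for i \<sigma>
    by (rule pmf_integrable_bounded[where B=1]) (rule hterm_bound[OF w])
  have iB: "integrable G (Bsum l n)"
  proof (rule pmf_integrable_bounded[where B="real n ^ 2"])
    fix g show "\<bar>Bsum l n g\<bar> \<le> real n ^ 2" using Bsum_bounds[of l n g] by simp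
  qed
  have iA: "integrable G (\<lambda>g. Aterm n g l i)" for i
    unfolding Aterm_def using ih by simp
  have "(\<Sum>i<n. \<Sum>j<n. measure_pmf.expectation G (?T i j))
      = measure_pmf.expectation G (\<lambda>g. \<Sum>i<n. \<Sum>j<n. ?T i j g)"
  proof -
    have "measure_pmf.expectation G (\<lambda>g. \<Sum>i<n. \<Sum>j<n. ?T i j g)
        = (\<Sum>i<n. measure_pmf.expectation G (\<lambda>g. \<Sum>j<n. ?T i j g))"
      by (rule Bochner_Integration.integral_sum) (use iT in simp)
    also have "\<dots> = (\<Sum>i<n. \<Sum>j<n. measure_pmf.expectation G (?T i j))"
      by (rule sum.cong[OF refl], rule Bochner_Integration.integral_sum, rule iT)
    finally show ?thesis by simp
  qed
  also have "\<dots> \<le> measure_pmf.expectation G (\<lambda>g. Bsum l n g + real n * (\<Sum>i<n. Aterm n g l i))"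
  proof (rule integral_mono_AE)
    show "integrable (measure_pmf G) (\<lambda>g. \<Sum>i<n. \<Sum>j<n. ?T i j g)" using iT by simp
    show "integrable (measure_pmf G) (\<lambda>g. Bsum l n g + real n * (\<Sum>i<n. Aterm n g l i))"
      using iA iB by simp
    show "AE g in measure_pmf G. (\<Sum>i<n. \<Sum>j<n. ?T i j g) \<le> Bsum l n g + real n * (\<Sum>i<n. Aterm n g l i)"
      unfolding AE_measure_pmf_iff
    proof
      fix g assume g: "g \<in> set_pmf G"
      have "(\<Sum>i<n. \<Sum>j<n. ?T i j g) \<le> (\<Sum>i<n. real (card {j. j < n \<and> dist_le g l i j}) + real n * Aterm n g l i)"
        by (intro sum_mono tv_row_bound w g)
      then show "(\<Sum>i<n. \<Sum>j<n. ?T i j g) \<le> Bsum l n g + real n * (\<Sum>i<n. Aterm n g l i)"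
        by (simp add: Bsum_def sum.distrib sum_distrib_left)
    qed
  qed
  also have "\<dots> = measure_pmf.expectation G (Bsum l n) +
      real n * (\<Sum>i<n. \<Sum>\<sigma>\<in>configs n. measure_pmf.expectation G (?h i \<sigma>))"
  proof -
    have "measure_pmf.expectation G (\<lambda>g. Bsum l n g + real n * (\<Sum>i<n. Aterm n g l i))
      = measure_pmf.expectation G (Bsum l n) + measure_pmf.expectation G (\<lambda>g. real n * (\<Sum>i<n. Aterm n g l i))"
      by (rule Bochner_Integration.integral_add) (use iA iB in simp_all)
    also have "measure_pmf.expectation G (\<lambda>g. real n * (\<Sum>i<n. Aterm n g l i))
        = real n * measure_pmf.expectation G (\<lambda>g. \<Sum>i<n. Aterm n g l i)"
      by (rule integral_mult_right_zero)
    also have "measure_pmf.expectation G (\<lambda>g. \<Sum>i<n. Aterm n g l i)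
        = (\<Sum>i<n. measure_pmf.expectation G (\<lambda>g. Aterm n g l i))"
      by (rule Bochner_Integration.integral_sum) (rule iA)
    also have "\<dots> = (\<Sum>i<n. \<Sum>\<sigma>\<in>configs n. measure_pmf.expectation G (?h i \<sigma>))"
      unfolding Aterm_def by (rule sum.cong[OF refl], rule Bochner_Integration.integral_sum, rule ih)
    finally show ?thesis by simp
  qed
  finally have *: "(\<Sum>i<n. \<Sum>j<n. measure_pmf.expectation G (?T i j)) \<le> \<dots>" .
  have "(1 / real n ^ 2) * (\<Sum>i<n. \<Sum>j<n. measure_pmf.expectation G (?T i j))
      \<le> (1 / real n ^ 2) * (measure_pmf.expectation G (Bsum l n) +
      real n * (\<Sum>i<n. \<Sum>\<sigma>\<in>configs n. measure_pmf.expectation G (?h i \<sigma>)))"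
    by (rule mult_left_mono[OF *]) simp
  also have "\<dots> = measure_pmf.expectation G (Bsum l n) / real n ^ 2 +
        (1 / real n) * (\<Sum>i<n. \<Sum>\<sigma>\<in>configs n. measure_pmf.expectation G (?h i \<sigma>))"
  proof -
    have nz: "real n \<noteq> 0" using n by simp
    show ?thesis using nz by (simp add: distrib_left power2_eq_square)
  qed
  finally show ?thesis .
qed



lemma abstract_limit:
  fixes G :: "nat \<Rightarrow> 'o::finite fgraph pmf"
  assumes supp: "eventually (\<lambda>n. \<forall>g\<in>set_pmf (G n). wnn n g) sequentially"
    and ballz: "\<And>l. (\<lambda>n. measure_pmf.expectation (G n) (Bsum l n) / real n ^ 2) \<longlonglongrightarrow> 0"
    and hyp: "(\<lambda>l. limsup (\<lambda>n. ereal (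
                 (1 / real n) * (\<Sum>i<n. \<Sum>\<sigma>\<in>configs n.
                   measure_pmf.expectation (G n) (\<lambda>g.
                     gibbs n g \<sigma> * tv_dist (marg1 n g i) (cond_marg1 n g i (nabla n g l i \<sigma>)))))))
              \<longlonglongrightarrow> 0"
  shows "(\<lambda>n. (1 / real n ^ 2) * (\<Sum>i<n. \<Sum>j<n.
            measure_pmf.expectation (G n) (\<lambda>g.
              tv_dist (marg2 n g i j) (\<lambda>(\<omega>, \<omega>'). marg1 n g i \<omega> * marg1 n g j \<omega>'))))
         \<longlonglongrightarrow> 0"
proof (rule order_tendstoI)
  let ?F = "\<lambda>n. (1 / real n ^ 2) * (\<Sum>i<n. \<Sum>j<n.
            measure_pmf.expectation (G n) (\<lambda>g.
              tv_dist (marg2 n g i j) (\<lambda>(\<omega>, \<omega>'). marg1 n g i \<omega> * marg1 n g j \<omega>')))"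
  have F0: "?F n \<ge> 0" for n
    by (intro mult_nonneg_nonneg sum_nonneg integral_nonneg_AE) (auto simp: tv_nonneg)
  fix a :: real
  {
    assume "a < 0"
    then have "\<forall>n. a < ?F n" using F0 by (meson less_le_trans)
    then show "eventually (\<lambda>n. a < ?F n) sequentially" by (rule always_eventually)
  }
  assume a: "0 < a"
  let ?H = "\<lambda>l n. (1 / real n) * (\<Sum>i<n. \<Sum>\<sigma>\<in>configs n.
                   measure_pmf.expectation (G n) (\<lambda>g.
                     gibbs n g \<sigma> * tv_dist (marg1 n g i) (cond_marg1 n g i (nabla n g l i \<sigma>))))"
  have "eventually (\<lambda>l. limsup (\<lambda>n. ereal (?H l n)) < ereal (a/2)) sequentially"
    using order_tendstoD(2)[OF hyp] a by simp
  then obtain l where l: "limsup (\<lambda>n. ereal (?H l n)) < ereal (a/2)"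
    by (auto simp: eventually_sequentially)
  have e1: "eventually (\<lambda>n. ereal (?H l n) < ereal (a/2)) sequentially"
    using Limsup_lessD[OF l] .
  have e2: "eventually (\<lambda>n. measure_pmf.expectation (G n) (Bsum l n) / real n ^ 2 < a/2) sequentially"
    using order_tendstoD(2)[OF ballz[of l], of "a/2"] a by simp
  show "eventually (\<lambda>n. ?F n < a) sequentially"
    using e1 e2 supp eventually_gt_at_top[of 0]
  proof eventually_elim
    case (elim n)
    have "?F n \<le> measure_pmf.expectation (G n) (Bsum l n) / real n ^ 2 + ?H l n"
      by (rule step_bound) (use elim in auto)
    moreover have "?H l n < a/2" using elim(1) by simp
    ultimately show ?case using elim(2) by linarith
  qed
qed



lemma poisson_mgf:
  assumes r: "0 < r" and c: "0 \<le> c"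
  shows "(\<integral>\<^sup>+m. ennreal (c ^ m) \<partial>measure_pmf (poisson_pmf r)) = ennreal (exp (r * (c - 1)))"
proof -
  have e: "(\<lambda>m. (r * c) ^ m / fact m) = (\<lambda>m. (r * c) ^ m /\<^sub>R fact m)"
    by (rule ext) (simp add: divide_inverse_commute)
  have s: "(\<lambda>m. (r * c) ^ m / fact m) sums exp (r * c)"
    unfolding e by (rule exp_converges)
  have e2: "(\<lambda>m. r ^ m / fact m * exp (-r) * c ^ m) = (\<lambda>m. (r * c) ^ m / fact m * exp (-r))"
    by (rule ext) (simp add: power_mult_distrib mult_ac)
  have s2: "(\<lambda>m. r ^ m / fact m * exp (-r) * c ^ m) sums (exp (r * c) * exp (-r))"
    unfolding e2 by (rule sums_mult2[OF s])
  have "(\<integral>\<^sup>+m. ennreal (c ^ m) \<partial>measure_pmf (poisson_pmf r))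
      = (\<integral>\<^sup>+m. ennreal (r ^ m / fact m * exp (-r) * c ^ m) \<partial>count_space UNIV)"
    unfolding nn_integral_measure_pmf using r c
    by (intro nn_integral_cong) (simp add: ennreal_mult'[symmetric])
  also have "\<dots> = (\<Sum>m. ennreal (r ^ m / fact m * exp (-r) * c ^ m))"
    by (rule nn_integral_count_space_nat)
  also have "\<dots> = ennreal (\<Sum>m. r ^ m / fact m * exp (-r) * c ^ m)"
    by (rule suminf_ennreal2) (use r c s2 in \<open>auto simp: sums_iff\<close>)
  also have "(\<Sum>m. r ^ m / fact m * exp (-r) * c ^ m) = exp (r * c) * exp (-r)"
    using s2 by (simp add: sums_iff)
  also have "exp (r * c) * exp (-r) = exp (r * (c - 1))"
    by (simp add: exp_add[symmetric] algebra_simps)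
  finally show ?thesis .
qed

lemma replicate_prod_int:
  assumes h: "\<And>x. h x \<ge> (0::real)"
  shows "(\<integral>\<^sup>+xs. ennreal (prod_list (map h xs)) \<partial>measure_pmf (replicate_pmf m p))
      = (\<integral>\<^sup>+x. ennreal (h x) \<partial>measure_pmf p) ^ m"
proof (induction m)
  case 0
  then show ?case by simp
next
  case (Suc m)
  have "(\<integral>\<^sup>+xs. ennreal (prod_list (map h xs)) \<partial>measure_pmf (replicate_pmf (Suc m) p))
      = (\<integral>\<^sup>+x. \<integral>\<^sup>+xs. ennreal (h x) * ennreal (prod_list (map h xs)) \<partial>measure_pmf (replicate_pmf m p) \<partial>measure_pmf p)"
    using h by (simp add: ennreal_mult' prod_list_nonneg)
  also have "\<dots> = (\<integral>\<^sup>+x. ennreal (h x) * (\<integral>\<^sup>+x. ennreal (h x) \<partial>measure_pmf p) ^ m \<partial>measure_pmf p)"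
    by (simp add: nn_integral_cmult Suc)
  also have "\<dots> = (\<integral>\<^sup>+x. ennreal (h x) \<partial>measure_pmf p) ^ Suc m"
    by (simp add: nn_integral_multc mult.commute)
  finally show ?case .
qed



lemma bern_aux:
  assumes n: "n > (0::nat)"
  shows "real n ^ k - (real n - 1) ^ k \<le> real k / real n * real n ^ k"
proof -
  have "1 + real k * (- 1 / real n) \<le> (1 + (- 1 / real n)) ^ k"
    by (rule Bernoulli_inequality) (use n in \<open>simp add: field_simps\<close>)
  then have "(1 - real k / real n) * real n ^ k \<le> (1 - 1 / real n) ^ k * real n ^ k"
    by (intro mult_right_mono) auto
  also have "(1 - 1 / real n) ^ k * real n ^ k = (real n - 1) ^ k"
    using n by (simp add: power_mult_distrib[symmetric] algebra_simps)
  finally show ?thesis by (simp add: algebra_simps)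
qed

definition Lset :: "nat \<Rightarrow> nat \<Rightarrow> nat list set" where
  "Lset n k = {vs. length vs = k \<and> set vs \<subseteq> {..<n}}"

lemma Lset_alt: "Lset n k = {vs. set vs \<subseteq> {..<n} \<and> length vs = k}"
  by (auto simp: Lset_def)

lemma Lset_finite: "finite (Lset n k)"
  unfolding Lset_alt by (rule finite_lists_length_eq) simp

lemma Lset_card: "card (Lset n k) = n ^ k"
  unfolding Lset_alt by (subst card_lists_length_eq) simp_all

lemma Lset_ne: "n > 0 \<Longrightarrow> Lset n k \<noteq> {}"
  by (auto simp: Lset_def intro!: exI[of _ "replicate k 0"])

lemma Lset_count:
  assumes n: "n > 0"
  shows "real (\<Sum>vs\<in>Lset n k. (if v \<in> set vs then 2 else 1 :: nat)) / real (card (Lset n k))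
      \<le> 1 + real k / real n"
proof -
  let ?L = "Lset n k"
  let ?A = "{vs\<in>?L. v \<in> set vs}"
  let ?B = "{vs\<in>?L. v \<notin> set vs}"
  have fin: "finite ?L" by (rule Lset_finite)
  have s: "(\<Sum>vs\<in>?L. (if v \<in> set vs then 2 else 1 :: nat)) = card ?L + card ?A"
  proof -
    have "(\<Sum>vs\<in>?L. (if v \<in> set vs then 2 else 1 :: nat)) = (\<Sum>vs\<in>?L. 1 + (if v \<in> set vs then 1 else 0))"
      by (rule sum.cong) auto
    also have "\<dots> = (\<Sum>vs\<in>?L. 1) + (\<Sum>vs\<in>?L. (if v \<in> set vs then 1 else 0))"
      by (rule sum.distrib)
    also have "(\<Sum>vs\<in>?L. (if v \<in> set vs then 1 else 0)) = card ?A"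
      using fin by (simp add: sum.If_cases Int_def)
    also have "(\<Sum>vs\<in>?L. 1) = card ?L" by simp
    finally show ?thesis .
  qed
  have AB: "card ?A + card ?B = card ?L"
  proof -
    have "card (?A \<union> ?B) = card ?A + card ?B" by (rule card_Un_disjoint) (use fin in auto)
    moreover have "?A \<union> ?B = ?L" by auto
    ultimately show ?thesis by simp
  qed
  have B: "card ?B \<ge> (n - 1) ^ k"
  proof -
    have "?B = {vs. set vs \<subseteq> {..<n} - {v} \<and> length vs = k}" by (auto simp: Lset_def)
    then have "card ?B = card ({..<n} - {v}) ^ k" by (simp add: card_lists_length_eq)
    moreover have "card ({..<n} - {v}) \<ge> n - 1" by (simp add: card_Diff_singleton_if)
    ultimately show ?thesis by (simp add: power_mono)
  qed
  have cL: "card ?L = n ^ k" by (rule Lset_card)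
  have "real (card ?A) \<le> real n ^ k - (real n - 1) ^ k"
  proof -
    have "card ?A + (n - 1) ^ k \<le> n ^ k" using AB B cL by linarith
    then have "real (card ?A) + real ((n - 1) ^ k) \<le> real (n ^ k)" by (simp only: of_nat_add[symmetric] of_nat_le_iff)
    then show ?thesis using n by (simp add: of_nat_diff)
  qed
  also have "\<dots> \<le> real k / real n * real n ^ k" by (rule bern_aux[OF n])
  finally have A: "real (card ?A) \<le> real k / real n * real n ^ k" .
  have pos: "real n ^ k > 0" using n by simp
  show ?thesis unfolding s cL using A pos by (simp add: field_simps)
qed

lemma pf_int:
  assumes n: "n > 0"
  shows "(\<integral>\<^sup>+f. ennreal (if v \<in> set (snd f) then 2 else 1) \<partial>measure_pmf (poisson_factor n k \<rho>))
     \<le> ennreal (1 + real k / real n)"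
proof -
  let ?L = "Lset n k"
  have L: "{vs. length vs = k \<and> set vs \<subseteq> {..<n}} = ?L" by (simp add: Lset_def)
  have "(\<integral>\<^sup>+f. ennreal (if v \<in> set (snd f) then 2 else 1) \<partial>measure_pmf (poisson_factor n k \<rho>))
     = (\<integral>\<^sup>+\<psi>. (\<integral>\<^sup>+vs. ennreal (if v \<in> set vs then 2 else 1) \<partial>measure_pmf (pmf_of_set ?L)) \<partial>measure_pmf \<rho>)"
    unfolding poisson_factor_def L by simp
  also have "(\<integral>\<^sup>+vs. ennreal (if v \<in> set vs then 2 else 1) \<partial>measure_pmf (pmf_of_set ?L))
      = (\<Sum>vs\<in>?L. ennreal (if v \<in> set vs then 2 else 1)) / card ?L"
    by (rule nn_integral_pmf_of_set) (use Lset_ne[OF n] Lset_finite in auto)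
  also have "(\<Sum>vs\<in>?L. ennreal (if v \<in> set vs then 2 else 1)) = ennreal (real (\<Sum>vs\<in>?L. (if v \<in> set vs then 2 else 1 :: nat)))"
  proof -
    have "(\<Sum>vs\<in>?L. ennreal (if v \<in> set vs then 2 else 1)) = (\<Sum>vs\<in>?L. ennreal (real (if v \<in> set vs then 2 else 1::nat)))"
      by (rule sum.cong) auto
    also have "\<dots> = ennreal (\<Sum>vs\<in>?L. real (if v \<in> set vs then 2 else 1::nat))"
      by (rule sum_ennreal) simp
    finally show ?thesis by (simp only: of_nat_sum)
  qed
  also have "ennreal (real (\<Sum>vs\<in>?L. (if v \<in> set vs then 2 else 1 :: nat))) / of_nat (card ?L)
      = ennreal (real (\<Sum>vs\<in>?L. (if v \<in> set vs then 2 else 1 :: nat)) / real (card ?L))"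
    using Lset_card[of n k] n by (simp add: ennreal_of_nat_eq_real_of_nat) (rule divide_ennreal, auto intro!: sum_nonneg)
  also have "(\<integral>\<^sup>+\<psi>. ennreal (real (\<Sum>vs\<in>?L. (if v \<in> set vs then 2 else 1 :: nat)) / real (card ?L)) \<partial>measure_pmf \<rho>)
      = ennreal (real (\<Sum>vs\<in>?L. (if v \<in> set vs then 2 else 1 :: nat)) / real (card ?L))"
    by (simp add: measure_pmf.emeasure_space_1)
  also have "\<dots> \<le> ennreal (1 + real k / real n)"
    by (rule ennreal_leI) (rule Lset_count[OF n])
  finally show ?thesis .
qed



definition hv :: "nat \<Rightarrow> 'o factor \<Rightarrow> real" where
  "hv v f = (if v \<in> set (snd f) then 2 else 1)"

lemma fdeg_prod: "(2::real) ^ fdeg g v = prod_list (map (hv v) g)"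
proof -
  have "fdeg g v = length (filter (\<lambda>f. v \<in> set (snd f)) g)"
    unfolding fdeg_def by (simp add: length_filter_conv_card)
  moreover have "(2::real) ^ length (filter (\<lambda>f. v \<in> set (snd f)) g) = prod_list (map (hv v) g)"
    by (induction g) (auto simp: hv_def)
  ultimately show ?thesis by simp
qed

lemma poisson_deg_mgf:
  assumes n: "n > 0" and d: "d > 0" and k: "k > 0"
  shows "(\<integral>\<^sup>+g. ennreal (2 ^ fdeg g v) \<partial>measure_pmf (poisson_model d k \<rho> n)) \<le> ennreal (exp d)"
proof -
  let ?pf = "poisson_factor n k \<rho>"
  let ?c = "1 + real k / real n"
  have r: "d * real n / real k > 0" using n d k by simp
  have "(\<integral>\<^sup>+g. ennreal (2 ^ fdeg g v) \<partial>measure_pmf (poisson_model d k \<rho> n))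
     = (\<integral>\<^sup>+m. (\<integral>\<^sup>+g. ennreal (prod_list (map (hv v) g)) \<partial>measure_pmf (replicate_pmf m ?pf)) \<partial>measure_pmf (poisson_pmf (d * real n / real k)))"
    unfolding poisson_model_def fdeg_prod by simp
  also have "\<dots> = (\<integral>\<^sup>+m. (\<integral>\<^sup>+f. ennreal (hv v f) \<partial>measure_pmf ?pf) ^ m \<partial>measure_pmf (poisson_pmf (d * real n / real k)))"
    by (intro nn_integral_cong replicate_prod_int) (simp add: hv_def)
  also have "\<dots> \<le> (\<integral>\<^sup>+m. ennreal (?c ^ m) \<partial>measure_pmf (poisson_pmf (d * real n / real k)))"
  proof (intro nn_integral_mono)
    fix m
    have "(\<integral>\<^sup>+f. ennreal (hv v f) \<partial>measure_pmf ?pf) \<le> ennreal ?c"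
      using pf_int[OF n, where v=v and k=k and \<rho>=\<rho>] unfolding hv_def by (simp add: if_distrib)
    then have "(\<integral>\<^sup>+f. ennreal (hv v f) \<partial>measure_pmf ?pf) ^ m \<le> ennreal ?c ^ m"
      by (rule power_mono) simp
    then show "(\<integral>\<^sup>+f. ennreal (hv v f) \<partial>measure_pmf ?pf) ^ m \<le> ennreal (?c ^ m)"
      by (subst ennreal_power[symmetric]) auto
  qed
  also have "\<dots> = ennreal (exp (d * real n / real k * (?c - 1)))"
    by (rule poisson_mgf[OF r]) simp
  also have "d * real n / real k * (?c - 1) = d" using n k by (simp add: field_simps)
  finally show ?thesis .
qed

lemma poisson_bad:
  assumes n: "n > 0" and d: "d > 0" and k: "k > 0"
  shows "measure (measure_pmf (poisson_model d k \<rho> n)) {g. D < fdeg g v} \<le> exp d / 2 ^ D"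
proof -
  let ?M = "measure_pmf (poisson_model d k \<rho> n)"
  have "emeasure ?M {g. D < fdeg g v} = (\<integral>\<^sup>+g. indicator {g. D < fdeg g v} g \<partial>?M)"
    by simp
  also have "\<dots> \<le> (\<integral>\<^sup>+g. ennreal (2 ^ fdeg g v) * ennreal (1 / 2 ^ D) \<partial>?M)"
  proof (intro nn_integral_mono)
    fix g
    show "indicator {g. D < fdeg g v} g \<le> ennreal (2 ^ fdeg g v) * ennreal (1 / 2 ^ D)"
    proof (cases "D < fdeg g v")
      case True
      have "(2::real) ^ D \<le> 2 ^ fdeg g v" using True by (intro power_increasing) auto
      then have "1 \<le> (2::real) ^ fdeg g v * (1 / 2 ^ D)" by (simp add: field_simps)
      then have "ennreal 1 \<le> ennreal ((2::real) ^ fdeg g v * (1 / 2 ^ D))" by (rule ennreal_leI)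
      then show ?thesis using True by (simp add: ennreal_mult'[symmetric])
    qed simp
  qed
  also have "\<dots> = (\<integral>\<^sup>+g. ennreal (2 ^ fdeg g v) \<partial>?M) * ennreal (1 / 2 ^ D)"
    by (rule nn_integral_multc) simp
  also have "\<dots> \<le> ennreal (exp d) * ennreal (1 / 2 ^ D)"
    by (intro mult_right_mono poisson_deg_mgf[OF n d k]) simp
  also have "\<dots> = ennreal (exp d / 2 ^ D)" by (simp add: ennreal_mult'[symmetric])
  finally have "ennreal (measure ?M {g. D < fdeg g v}) \<le> ennreal (exp d / 2 ^ D)"
    by (simp add: measure_pmf.emeasure_eq_measure)
  then show ?thesis by (simp add: ennreal_le_iff)
qed



lemma log_poly_lim:
  fixes c :: real
  assumes c: "c \<ge> 0"
  shows "(\<lambda>n::nat. (c + 2 * log 2 (real n)) ^ l / real n) \<longlonglongrightarrow> 0"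
proof -
  define c' where "c' = c + 2 / ln 2"
  have c'0: "c' \<ge> 0" using c by (simp add: c'_def)
  have lim1: "(\<lambda>n::nat. ln (real n) ^ l / exp (ln (real n))) \<longlonglongrightarrow> 0"
    by (rule filterlim_compose[OF tendsto_power_div_exp_0])
       (rule filterlim_compose[OF ln_at_top filterlim_real_sequentially])
  have lim2: "(\<lambda>n::nat. c' ^ l * (ln (real n) ^ l / exp (ln (real n)))) \<longlonglongrightarrow> 0"
    using tendsto_mult_right_zero[OF lim1] by simp
  have ev: "eventually (\<lambda>n::nat. 1 \<le> ln (real n)) sequentially"
    using filterlim_compose[OF ln_at_top filterlim_real_sequentially]
    by (simp add: filterlim_at_top)
  show ?thesis
  proof (rule real_tendsto_sandwich[OF _ _ tendsto_const lim2])
    show "eventually (\<lambda>n::nat. 0 \<le> (c + 2 * log 2 (real n)) ^ l / real n) sequentially"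
      using ev
    proof eventually_elim
      case (elim n)
      then have "n > 0" by (cases n) auto
      then have "log 2 (real n) \<ge> 0" by simp
      then show ?case using c by simp
    qed
    show "eventually (\<lambda>n::nat. (c + 2 * log 2 (real n)) ^ l / real n
        \<le> c' ^ l * (ln (real n) ^ l / exp (ln (real n)))) sequentially"
      using ev
    proof eventually_elim
      case (elim n)
      then have n: "real n > 0" by (cases n) auto
      have lg: "log 2 (real n) \<ge> 0" using n by simp
      have "c + 2 * log 2 (real n) = c + (2 / ln 2) * ln (real n)"
        by (simp add: log_def)
      also have "\<dots> \<le> c' * ln (real n)"
        using elim c by (simp add: c'_def distrib_right) (simp add: mult_left_mono[of 1 "ln (real n)" c, simplified])
      finally have "(c + 2 * log 2 (real n)) ^ l \<le> (c' * ln (real n)) ^ l"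
        using lg c by (intro power_mono) auto
      then have "(c + 2 * log 2 (real n)) ^ l / real n \<le> (c' * ln (real n)) ^ l / real n"
        using n by (simp add: divide_right_mono)
      also have "\<dots> = c' ^ l * (ln (real n) ^ l / exp (ln (real n)))"
        using n by (simp add: power_mult_distrib)
      finally show ?case .
    qed
  qed
qed



lemma layer_finite: "finite (layer g x j)"
  by (induction j) (auto simp: layer_0 layer_Suc succs_finite)

lemma ball_finite: "finite {y. dist_le g l x y}"
proof -
  have fin: "finite (\<Union>j\<in>{..l}. layer g x j)" by (simp add: layer_finite)
  have sub: "Inl ` {y. dist_le g l x y} \<subseteq> (\<Union>j\<in>{..l}. layer g x j)"
    by (auto simp: dist_le_def layer_def)
  show ?thesis using finite_subset[OF sub fin] by (rule finite_imageD) simp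
qed

lemma Bsum_det:
  assumes "\<And>a. a < length g \<Longrightarrow> length (snd (g ! a)) \<le> k" "\<And>v. fdeg g v \<le> D"
  shows "Bsum l n g \<le> real n * (real (l + 1) * (real k + real D + 1) ^ l)"
proof -
  have "(\<Sum>i<n. card {j. j < n \<and> dist_le g l i j}) \<le> (\<Sum>i<n. (l + 1) * (k + D + 1) ^ l)"
  proof (intro sum_mono)
    fix i
    have "card {j. j < n \<and> dist_le g l i j} \<le> card {y. dist_le g l i y}"
      by (rule card_mono[OF ball_finite]) auto
    also have "\<dots> \<le> (l + 1) * (k + D + 1) ^ l" by (rule ball_bound[OF assms])
    finally show "card {j. j < n \<and> dist_le g l i j} \<le> (l + 1) * (k + D + 1) ^ l" .
  qed
  then have "Bsum l n g \<le> real (n * ((l + 1) * (k + D + 1) ^ l))"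
    unfolding Bsum_def by (simp only: of_nat_le_iff) simp
  also have "real (n * ((l + 1) * (k + D + 1) ^ l)) = real n * (real (l + 1) * (real k + real D + 1) ^ l)"
    by (simp only: of_nat_mult of_nat_power of_nat_add of_nat_1)
  finally show ?thesis .
qed

lemma poisson_supp:
  assumes n: "n > 0" and g: "g \<in> set_pmf (poisson_model d k \<rho> n)" and f: "f \<in> set g"
  shows "fst f \<in> set_pmf \<rho> \<and> snd f \<in> Lset n k"
proof -
  have L: "{vs. length vs = k \<and> set vs \<subseteq> {..<n}} = Lset n k" by (simp add: Lset_def)
  have sp: "set_pmf (poisson_factor n k \<rho>) \<subseteq> {f. fst f \<in> set_pmf \<rho> \<and> snd f \<in> Lset n k}"
    unfolding poisson_factor_def L using Lset_ne[OF n] Lset_finite by auto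
  from g obtain m where "g \<in> set_pmf (replicate_pmf m (poisson_factor n k \<rho>))"
    unfolding poisson_model_def by auto
  then have "set g \<subseteq> set_pmf (poisson_factor n k \<rho>)" by (auto simp: set_replicate_pmf)
  then show ?thesis using f sp by blast
qed

lemma poisson_wnn:
  assumes n: "n > 0" and g: "g \<in> set_pmf (poisson_model d k \<rho> n)"
    and Psi_pos: "\<And>\<psi> \<tau>. \<psi> \<in> \<Psi> \<Longrightarrow> length \<tau> = k \<Longrightarrow> \<psi> \<tau> > 0"
    and rho: "set_pmf \<rho> \<subseteq> \<Psi>"
  shows "wnn n (g :: 'o::finite fgraph)"
  unfolding wnn_def fg_weight_def
proof (intro ballI prod_list_nonneg)
  fix \<sigma> :: "nat \<Rightarrow> 'o" and x
  assume "x \<in> set (map (\<lambda>(\<psi>, vs). \<psi> (map \<sigma> vs)) g)"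
  then obtain \<psi> vs where f: "(\<psi>, vs) \<in> set g" and x: "x = \<psi> (map \<sigma> vs)" by auto
  from poisson_supp[OF n g f] have "\<psi> \<in> \<Psi>" "length vs = k" using rho by (auto simp: Lset_def)
  then show "0 \<le> x" unfolding x using Psi_pos[of \<psi> "map \<sigma> vs"] by simp
qed

lemma poisson_shape:
  assumes n: "n > 0" and g: "g \<in> set_pmf (poisson_model d k \<rho> n)"
  shows "\<And>a. a < length g \<Longrightarrow> length (snd (g ! a)) \<le> k"
    and "\<And>v. v \<ge> n \<Longrightarrow> fdeg g v = 0"
proof -
  fix a assume "a < length g"
  then have "g ! a \<in> set g" by simp
  from poisson_supp[OF n g this] show "length (snd (g ! a)) \<le> k" by (simp add: Lset_def)
next
  fix v assume v: "v \<ge> n"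
  have "{a. a < length g \<and> v \<in> set (snd (g ! a))} = {}"
  proof (intro set_eqI iffI)
    fix a assume "a \<in> {a. a < length g \<and> v \<in> set (snd (g ! a))}"
    then have a: "a < length g" "v \<in> set (snd (g ! a))" by auto
    then have "g ! a \<in> set g" by simp
    from poisson_supp[OF n g this] a(2) v show "a \<in> {}" by (auto simp: Lset_def)
  qed simp
  then show "fdeg g v = 0" by (simp add: fdeg_def)
qed



lemma two_pow_D:
  assumes n: "n > (0::nat)"
  shows "real n ^ 2 \<le> (2::real) ^ nat \<lceil>2 * log 2 (real n)\<rceil>"
    and "real (nat \<lceil>2 * log 2 (real n)\<rceil>) \<le> 2 * log 2 (real n) + 1"
proof -
  have lg: "log 2 (real n) \<ge> 0" using n by simp
  have "2 powr (2 * log 2 (real n)) = 2 powr (log 2 (real n) + log 2 (real n))"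
    by (simp only: mult_2)
  also have "\<dots> = 2 powr (log 2 (real n)) * 2 powr (log 2 (real n))" by (rule powr_add)
  also have "2 powr (log 2 (real n)) = real n" using n by simp
  finally have "real n ^ 2 = 2 powr (2 * log 2 (real n))" by (simp add: power2_eq_square)
  also have "\<dots> \<le> 2 powr real (nat \<lceil>2 * log 2 (real n)\<rceil>)"
    using lg by (intro powr_mono) linarith+
  also have "\<dots> = 2 ^ nat \<lceil>2 * log 2 (real n)\<rceil>" by (simp add: powr_realpow)
  finally show "real n ^ 2 \<le> (2::real) ^ nat \<lceil>2 * log 2 (real n)\<rceil>" .
  show "real (nat \<lceil>2 * log 2 (real n)\<rceil>) \<le> 2 * log 2 (real n) + 1"
    using lg by linarith
qed

lemma poisson_ballz:
  fixes \<rho> :: "('o list \<Rightarrow> real) pmf"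
  assumes d: "d > 0" and k: "k > 0"
  shows "(\<lambda>n. measure_pmf.expectation (poisson_model d k \<rho> n) (Bsum l n) / real n ^ 2) \<longlonglongrightarrow> 0"
proof (rule real_tendsto_sandwich)
  let ?G = "\<lambda>n. poisson_model d k \<rho> n"
  let ?u = "\<lambda>n::nat. real (l + 1) * ((real k + 2 + 2 * log 2 (real n)) ^ l / real n) + exp d / real n"
  show "eventually (\<lambda>n. 0 \<le> measure_pmf.expectation (?G n) (Bsum l n) / real n ^ 2) sequentially"
  proof (rule always_eventually, rule allI)
    fix n
    have "0 \<le> measure_pmf.expectation (?G n) (Bsum l n)"
      by (rule integral_nonneg_AE) (simp add: Bsum_bounds)
    then show "0 \<le> measure_pmf.expectation (?G n) (Bsum l n) / real n ^ 2" by simp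
  qed
  show "(\<lambda>n. 0::real) \<longlonglongrightarrow> 0" by simp
  have l1: "(\<lambda>n::nat. (real k + 2 + 2 * log 2 (real n)) ^ l / real n) \<longlonglongrightarrow> 0"
    by (rule log_poly_lim) simp
  show "?u \<longlonglongrightarrow> 0"
    using tendsto_add[OF tendsto_mult_right_zero[OF l1, of "real (l+1)"] lim_const_over_n[of "exp d"]] by simp
  show "eventually (\<lambda>n. measure_pmf.expectation (?G n) (Bsum l n) / real n ^ 2 \<le> ?u n) sequentially"
    using eventually_gt_at_top[of 0]
  proof eventually_elim
    case (elim n)
    then have n: "n > 0" .
    define D where "D = nat \<lceil>2 * log 2 (real n)\<rceil>"
    define C where "C = real (l + 1) * (real k + real D + 1) ^ l"
    define bad where "bad = (\<Union>v\<in>{..<n}. {g :: 'o fgraph. D < fdeg g v})"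
    have C0: "C \<ge> 0" by (simp add: C_def)
    have pw: "Bsum l n g \<le> real n * C + real n ^ 2 * indicator bad g" if g: "g \<in> set_pmf (?G n)" for g
    proof (cases "g \<in> bad")
      case True
      have "real n * C \<ge> 0" using C0 by simp
      then show ?thesis using Bsum_bounds[of l n g] True by simp
    next
      case False
      have fd: "fdeg g v \<le> D" for v
      proof (cases "v < n")
        case True
        then have "\<not> D < fdeg g v" using False by (auto simp: bad_def)
        then show ?thesis by simp
      next
        case False
        then show ?thesis using poisson_shape(2)[OF n g, of v] by simp
      qed
      have "Bsum l n g \<le> real n * C"
        unfolding C_def by (rule Bsum_det) (use poisson_shape(1)[OF n g] fd in auto)
      then show ?thesis using False by simp
    qed
    have int1: "integrable (?G n) (Bsum l n)"
    proof (rule pmf_integrable_bounded[where B="real n ^ 2"])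
      fix g show "\<bar>Bsum l n g\<bar> \<le> real n ^ 2" using Bsum_bounds[of l n g] by simp
    qed
    have int2: "integrable (?G n) (\<lambda>g. real n * C + real n ^ 2 * indicator bad g)"
    proof (rule pmf_integrable_bounded[where B="real n * C + real n ^ 2"])
      fix g show "\<bar>real n * C + real n ^ 2 * indicator bad g\<bar> \<le> real n * C + real n ^ 2"
        using C0 by (auto simp: indicator_def)
    qed
    have "measure_pmf.expectation (?G n) (Bsum l n)
        \<le> measure_pmf.expectation (?G n) (\<lambda>g. real n * C + real n ^ 2 * indicator bad g)"
      by (rule integral_mono_AE[OF int1 int2]) (auto simp: AE_measure_pmf_iff pw)
    also have "\<dots> = real n * C + real n ^ 2 * measure (?G n) bad"
    proof -
      have "measure_pmf.expectation (?G n) (\<lambda>g. real n * C + real n ^ 2 * indicator bad g)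
          = measure_pmf.expectation (?G n) (\<lambda>g. real n * C) + measure_pmf.expectation (?G n) (\<lambda>g. real n ^ 2 * indicator bad g)"
      proof (rule Bochner_Integration.integral_add)
        show "integrable (?G n) (\<lambda>g. real n ^ 2 * indicator bad g)"
          by (rule pmf_integrable_bounded[where B="real n ^ 2"]) (simp add: indicator_def)
      qed simp
      also have "measure_pmf.expectation (?G n) (\<lambda>g. real n * C) = real n * C"
        by (simp add: measure_pmf.prob_space)
      also have "measure_pmf.expectation (?G n) (\<lambda>g. real n ^ 2 * indicator bad g) = real n ^ 2 * measure (?G n) bad"
        by (simp add: integral_mult_right_zero)
      finally show ?thesis .
    qed
    finally have E0: "measure_pmf.expectation (?G n) (Bsum l n) \<le> real n * C + real n ^ 2 * measure (?G n) bad" .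
    have mb0: "measure (?G n) bad \<le> (\<Sum>v<n. measure (?G n) {g. D < fdeg g v})"
      unfolding bad_def by (rule measure_UNION_le) auto
    also have "\<dots> \<le> (\<Sum>v<n. exp d / 2 ^ D)"
      by (intro sum_mono poisson_bad[OF n d k])
    also have "\<dots> \<le> real n * (exp d / real n ^ 2)"
    proof -
      have "real n ^ 2 \<le> 2 ^ D" unfolding D_def by (rule two_pow_D(1)[OF n])
      then have "exp d / 2 ^ D \<le> exp d / real n ^ 2"
        using n by (intro divide_left_mono) auto
      then have "real n * (exp d / 2 ^ D) \<le> real n * (exp d / real n ^ 2)"
        by (rule mult_left_mono) simp
      then show ?thesis by simp
    qed
    finally have mb: "measure (?G n) bad \<le> real n * (exp d / real n ^ 2)" .
    have E: "measure_pmf.expectation (?G n) (Bsum l n) \<le> real n * C + real n ^ 2 * (real n * (exp d / real n ^ 2))"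
      using E0 mult_left_mono[OF mb, of "real n ^ 2"] by simp
    have "C \<le> real (l + 1) * (real k + 2 + 2 * log 2 (real n)) ^ l"
    proof -
      have "real D \<le> 2 * log 2 (real n) + 1" unfolding D_def by (rule two_pow_D(2)[OF n])
      then have "(real k + real D + 1) ^ l \<le> (real k + 2 + 2 * log 2 (real n)) ^ l"
        by (intro power_mono) auto
      then show ?thesis unfolding C_def by (intro mult_left_mono) auto
    qed
    have "measure_pmf.expectation (?G n) (Bsum l n) / real n ^ 2
        \<le> (real n * C + real n ^ 2 * (real n * (exp d / real n ^ 2))) / real n ^ 2"
      using E by (simp add: divide_right_mono)
    also have "\<dots> = C / real n + exp d / real n"
    proof -
      have nz: "real n \<noteq> 0" using n by simp
      have "real n ^ 2 * (real n * (exp d / real n ^ 2)) = real n * exp d" using nz by simp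
      moreover have "(real n * C + real n * exp d) / real n ^ 2 = C / real n + exp d / real n"
        using nz by (simp add: power2_eq_square add_divide_distrib)
      ultimately show ?thesis by simp
    qed
    also have "\<dots> \<le> ?u n"
      using \<open>C \<le> _\<close> n by (simp add: divide_right_mono)
    finally show ?case .
  qed
qed



fun chunks :: "nat list \<Rightarrow> 'a list \<Rightarrow> 'a list list" where
  "chunks [] w = []"
| "chunks (l # ls) w = take l w # chunks ls (drop l w)"

lemma chunks_length: "length (chunks ls w) = length ls"
  by (induction ls arbitrary: w) auto

lemma chunks_nth_length:
  "sum_list ls \<le> length w \<Longrightarrow> i < length ls \<Longrightarrow> length (chunks ls w ! i) = ls ! i"
proof (induction ls arbitrary: w i)
  case (Cons l ls)
  then show ?case by (cases i) auto
qed simp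

lemma chunks_nth_set: "i < length ls \<Longrightarrow> set (chunks ls w ! i) \<subseteq> set w"
proof (induction ls arbitrary: w i)
  case (Cons l ls)
  then show ?case
    by (cases i) (auto dest: in_set_takeD in_set_dropD)
qed simp

lemma chunks_concat: "concat (chunks ls w) = take (sum_list ls) w"
  by (induction ls arbitrary: w) (auto simp: take_add)

lemma count_div:
  assumes D: "D > (0::nat)"
  shows "length (filter (\<lambda>u. u = v) (map (\<lambda>p. p div D) [0..<S])) \<le> D"
proof -
  have "length (filter (\<lambda>u. u = v) (map (\<lambda>p. p div D) [0..<S])) = card {p. p < S \<and> p div D = v}"
    by (simp add: length_filter_conv_card) (rule arg_cong[where f=card], auto)
  also have "\<dots> \<le> card {v * D..<v * D + D}"
  proof (rule card_mono)
    show "{p. p < S \<and> p div D = v} \<subseteq> {v * D..<v * D + D}"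
    proof
      fix p assume "p \<in> {p. p < S \<and> p div D = v}"
      then have "p div D = v" by simp
      then have e: "p = v * D + p mod D" using div_mult_mod_eq[of p D] by simp
      have "p mod D < D" using D by simp
      then show "p \<in> {v * D..<v * D + D}" using e by (simp del: div_mult_mod_eq)
    qed
  qed simp
  finally show ?thesis by simp
qed

lemma filter_take_le: "length (filter P (take m w)) \<le> length (filter P w)"
  by (metis append_take_drop_id filter_append length_append le_add1)

lemma reg_tuples_ne:
  assumes D: "D > 0" and S: "sum_list ls \<le> D * n"
  shows "reg_tuples (real D) n ls \<noteq> {}"
proof -
  define w where "w = map (\<lambda>p. p div D) [0..<sum_list ls]"
  have lw: "length w = sum_list ls" by (simp add: w_def)
  have "chunks ls w \<in> reg_tuples (real D) n ls"
    unfolding reg_tuples_def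
  proof (intro CollectI conjI allI impI)
    show "length (chunks ls w) = length ls" by (rule chunks_length)
    fix i assume i: "i < length ls"
    show "length (chunks ls w ! i) = ls ! i" using chunks_nth_length[OF _ i, of w] lw by simp
    have "set w \<subseteq> {..<n}"
    proof
      fix u assume "u \<in> set w"
      then obtain p where p: "p < sum_list ls" "u = p div D" by (auto simp: w_def)
      then have "p < D * n" using S by linarith
      then show "u \<in> {..<n}" using p D by (simp add: div_less_iff_less_mult mult.commute)
    qed
    moreover have "set (chunks ls w ! i) \<subseteq> set w" by (rule chunks_nth_set[OF i])
    ultimately show "set (chunks ls w ! i) \<subseteq> {..<n}" by (rule order.trans[rotated])
  next
    fix v
    have "degree (chunks ls w) v = length (filter (\<lambda>u. u = v) (take (sum_list ls) w))"
      by (simp add: degree_def chunks_concat)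
    also have "\<dots> \<le> length (filter (\<lambda>u. u = v) w)" by (rule filter_take_le)
    also have "\<dots> \<le> D" unfolding w_def by (rule count_div[OF D])
    finally show "real (degree (chunks ls w) v) \<le> real D" by simp
  qed
  then show ?thesis by blast
qed

lemma reg_tuples_finite: "finite (reg_tuples d n ls)"
proof -
  let ?B = "{vs. set vs \<subseteq> {..<n} \<and> length vs \<le> sum_list ls}"
  have fB: "finite ?B" by (rule finite_lists_length_le) simp
  have "reg_tuples d n ls \<subseteq> {vss. set vss \<subseteq> ?B \<and> length vss = length ls}"
  proof
    fix vss assume "vss \<in> reg_tuples d n ls"
    then have h: "length vss = length ls" "\<And>i. i < length ls \<Longrightarrow> length (vss ! i) = ls ! i \<and> set (vss ! i) \<subseteq> {..<n}"
      by (auto simp: reg_tuples_def)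
    have "set vss \<subseteq> ?B"
    proof
      fix vs assume "vs \<in> set vss"
      then obtain i where i: "i < length vss" "vs = vss ! i" by (auto simp: in_set_conv_nth)
      then show "vs \<in> ?B" using h(2)[of i] h(1) elem_le_sum_list[of i ls] by auto
    qed
    then show "vss \<in> {vss. set vss \<subseteq> ?B \<and> length vss = length ls}" using h(1) by simp
  qed
  moreover have "finite {vss. set vss \<subseteq> ?B \<and> length vss = length ls}"
    by (rule finite_lists_length_eq[OF fB])
  ultimately show ?thesis by (rule finite_subset)
qed

lemma fdeg_le_degree: "length (filter (\<lambda>vs. v \<in> set vs) vss) \<le> degree vss v"
proof (induction vss)
  case (Cons vs vss)
  have "length (filter (\<lambda>vs. v \<in> set vs) (vs # vss)) \<le> length (filter (\<lambda>u. u = v) vs) + degree vss v"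
  proof (cases "v \<in> set vs")
    case True
    then have "length (filter (\<lambda>u. u = v) vs) \<ge> 1"
      by (metis (mono_tags) One_nat_def Suc_leI filter_empty_conv length_greater_0_conv)
    then show ?thesis using True Cons by simp
  next
    case False
    then show ?thesis using Cons by simp
  qed
  then show ?case by (simp add: degree_def)
qed (simp add: degree_def)



lemma perc_supp:
  fixes \<rho> :: "('o::finite list \<Rightarrow> real) pmf"
  assumes n: "n > 0" and D: "D > 0" and k: "k > 0"
    and g: "g \<in> set_pmf (perc_reg_model (real D) \<epsilon> k \<rho> n)"
  shows "\<exists>js vss. (\<forall>x\<in>set js. fst x \<subseteq> {..<k} \<and> snd x \<in> set_pmf \<rho>)
     \<and> vss \<in> reg_tuples (real D) n (map (\<lambda>(J, _). card J) js)
     \<and> g = map2 (\<lambda>(J, \<psi>) vs. (restrict_wt k \<psi> J, vs)) js vss"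
proof -
  define P where "P = do { m \<leftarrow> poisson_pmf (real D * real n / real k);
                           replicate_pmf m (perc_data \<epsilon> k \<rho>) }"
  define S where "S = {js :: (nat set \<times> ('o list \<Rightarrow> real)) list. real (sum_list (map (\<lambda>(J, _). card J) js)) \<le> real D * real n}"
  have r: "real D * real n / real k > 0" using n D k by simp
  have e0: "[] \<in> set_pmf P"
  proof -
    have "[] \<in> set_pmf (replicate_pmf 0 (perc_data \<epsilon> k \<rho>))" by simp
    moreover have "(0::nat) \<in> set_pmf (poisson_pmf (real D * real n / real k))"
      using set_pmf_poisson[OF r] by simp
    ultimately show ?thesis unfolding P_def by (auto simp del: replicate_pmf.simps)
  qed
  have e1: "[] \<in> S" by (simp add: S_def)
  have ne: "set_pmf P \<inter> S \<noteq> {}" using e0 e1 by blast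
  have g': "g \<in> set_pmf (cond_pmf P S \<bind> (\<lambda>js. pmf_of_set (reg_tuples (real D) n (map (\<lambda>(J, _). card J) js)) \<bind>
          (\<lambda>vss. return_pmf (map2 (\<lambda>(J, \<psi>) vs. (restrict_wt k \<psi> J, vs)) js vss))))"
    using g unfolding perc_reg_model_def P_def S_def by simp
  then obtain js where js: "js \<in> set_pmf (cond_pmf P S)" and
    g2: "g \<in> set_pmf (pmf_of_set (reg_tuples (real D) n (map (\<lambda>(J, _). card J) js)) \<bind>
          (\<lambda>vss. return_pmf (map2 (\<lambda>(J, \<psi>) vs. (restrict_wt k \<psi> J, vs)) js vss)))"
    by auto
  from js have jsP: "js \<in> set_pmf P" and jsS: "js \<in> S" using set_cond_pmf[OF ne] by auto
  have pd: "set_pmf (perc_data \<epsilon> k \<rho>) \<subseteq> {x. fst x \<subseteq> {..<k} \<and> snd x \<in> set_pmf \<rho>}"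
    unfolding perc_data_def by auto
  from jsP obtain m where "js \<in> set_pmf (replicate_pmf m (perc_data \<epsilon> k \<rho>))"
    unfolding P_def by auto
  then have "set js \<subseteq> set_pmf (perc_data \<epsilon> k \<rho>)" by (auto simp: set_replicate_pmf)
  with pd have A: "\<forall>x\<in>set js. fst x \<subseteq> {..<k} \<and> snd x \<in> set_pmf \<rho>" by blast
  have sl: "sum_list (map (\<lambda>(J, _). card J) js) \<le> D * n"
  proof -
    have "real (sum_list (map (\<lambda>(J, _). card J) js)) \<le> real (D * n)" using jsS by (simp add: S_def)
    then show ?thesis by (simp only: of_nat_le_iff)
  qed
  have rne: "reg_tuples (real D) n (map (\<lambda>(J, _). card J) js) \<noteq> {}"
    by (rule reg_tuples_ne[OF D sl])
  from g2 obtain vss where vss: "vss \<in> reg_tuples (real D) n (map (\<lambda>(J, _). card J) js)"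
     and "g = map2 (\<lambda>(J, \<psi>) vs. (restrict_wt k \<psi> J, vs)) js vss"
    using rne reg_tuples_finite by auto
  then show ?thesis using A by blast
qed

lemma restrict_wt_nn:
  assumes "\<And>\<tau>. length \<tau> = k \<Longrightarrow> \<psi> \<tau> > 0"
  shows "restrict_wt k \<psi> J ys \<ge> 0"
  unfolding restrict_wt_def using assms
  by (intro divide_nonneg_nonneg sum_nonneg) (auto intro: less_imp_le)

lemma perc_props:
  fixes \<rho> :: "('o::finite list \<Rightarrow> real) pmf"
  assumes n: "n > 0" and D: "D > 0" and k: "k > 0"
    and g: "g \<in> set_pmf (perc_reg_model (real D) \<epsilon> k \<rho> n)"
    and Psi_pos: "\<forall>\<psi>\<in>\<Psi>. \<forall>\<tau>. length \<tau> = k \<longrightarrow> \<psi> \<tau> > 0"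
    and rho: "set_pmf \<rho> \<subseteq> \<Psi>"
  shows "\<And>a. a < length g \<Longrightarrow> length (snd (g ! a)) \<le> k"
    and "\<And>v. fdeg g v \<le> D"
    and "wnn n g"
proof -
  obtain js vss where A: "\<forall>x\<in>set js. fst x \<subseteq> {..<k} \<and> snd x \<in> set_pmf \<rho>"
    and V: "vss \<in> reg_tuples (real D) n (map (\<lambda>(J, _). card J) js)"
    and G: "g = map2 (\<lambda>(J, \<psi>) vs. (restrict_wt k \<psi> J, vs)) js vss"
    using perc_supp[OF n D k g] by blast
  from V have lv: "length vss = length js"
    and li: "\<And>i. i < length js \<Longrightarrow> length (vss ! i) = card (fst (js ! i))"
    and dg: "\<And>v. v < n \<Longrightarrow> real (degree vss v) \<le> real D"
    and st: "\<And>i. i < length js \<Longrightarrow> set (vss ! i) \<subseteq> {..<n}"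
    by (auto simp: reg_tuples_def split: prod.splits)
  have lg: "length g = length js" using G lv by simp
  have sg: "snd (g ! a) = vss ! a" if "a < length g" for a
    using that lg lv G by (auto split: prod.splits)
  show "length (snd (g ! a)) \<le> k" if a: "a < length g" for a
  proof -
    have aj: "a < length js" using a lg by simp
    then have "js ! a \<in> set js" by simp
    then have "fst (js ! a) \<subseteq> {..<k}" using A by blast
    then have "card (fst (js ! a)) \<le> k" using card_mono[of "{..<k}" "fst (js ! a)"] by simp
    then show ?thesis using sg[OF a] li[OF aj] by simp
  qed
  show "fdeg g v \<le> D" for v
  proof (cases "v < n")
    case True
    have "fdeg g v = card {a. a < length vss \<and> v \<in> set (vss ! a)}"
      unfolding fdeg_def using sg lg lv by (intro arg_cong[where f=card]) auto
    also have "\<dots> = length (filter (\<lambda>vs. v \<in> set vs) vss)"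
      by (simp add: length_filter_conv_card)
    also have "\<dots> \<le> degree vss v" by (rule fdeg_le_degree)
    finally show ?thesis using dg[OF True] by simp
  next
    case False
    have e: "{a. a < length g \<and> v \<in> set (snd (g ! a))} = {}"
      using sg st lg False by fastforce
    show ?thesis unfolding fdeg_def e by simp
  qed
  show "wnn n g"
    unfolding wnn_def fg_weight_def
  proof (intro ballI prod_list_nonneg)
    fix \<sigma> :: "nat \<Rightarrow> 'o" and x
    assume "x \<in> set (map (\<lambda>(\<psi>, vs). \<psi> (map \<sigma> vs)) g)"
    then obtain f where f: "f \<in> set g" and x: "x = fst f (map \<sigma> (snd f))" by auto
    from f obtain J \<psi> vs where "((J, \<psi>), vs) \<in> set (zip js vss)" and fe: "f = (restrict_wt k \<psi> J, vs)"
      unfolding G by auto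
    then have "(J, \<psi>) \<in> set js" by (blast dest: set_zip_leftD)
    then have "\<psi> \<in> \<Psi>" using A rho by auto
    then show "0 \<le> x" unfolding x fe using Psi_pos by (simp, intro restrict_wt_nn) auto
  qed
qed

lemma perc_ballz:
  fixes \<rho> :: "('o::finite list \<Rightarrow> real) pmf"
  assumes D: "D > 0" and k: "k > 0"
    and Psi_pos: "\<And>\<psi> \<tau>. \<psi> \<in> \<Psi> \<Longrightarrow> length \<tau> = k \<Longrightarrow> \<psi> \<tau> > 0"
    and rho: "set_pmf \<rho> \<subseteq> \<Psi>"
  shows "(\<lambda>n. measure_pmf.expectation (perc_reg_model (real D) \<epsilon> k \<rho> n) (Bsum l n) / real n ^ 2) \<longlonglongrightarrow> 0"
proof (rule real_tendsto_sandwich)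
  let ?G = "\<lambda>n. perc_reg_model (real D) \<epsilon> k \<rho> n"
  define C where "C = real (l + 1) * (real k + real D + 1) ^ l"
  show "eventually (\<lambda>n. 0 \<le> measure_pmf.expectation (?G n) (Bsum l n) / real n ^ 2) sequentially"
  proof (rule always_eventually, rule allI)
    fix n
    have "0 \<le> measure_pmf.expectation (?G n) (Bsum l n)"
      by (rule integral_nonneg_AE) (simp add: Bsum_bounds)
    then show "0 \<le> measure_pmf.expectation (?G n) (Bsum l n) / real n ^ 2" by simp
  qed
  show "(\<lambda>n. 0::real) \<longlonglongrightarrow> 0" by simp
  show "(\<lambda>n. C / real n) \<longlonglongrightarrow> 0" by (rule lim_const_over_n)
  show "eventually (\<lambda>n. measure_pmf.expectation (?G n) (Bsum l n) / real n ^ 2 \<le> C / real n) sequentially"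
    using eventually_gt_at_top[of 0]
  proof eventually_elim
    case (elim n)
    then have n: "n > 0" .
    have int1: "integrable (?G n) (Bsum l n)"
    proof (rule pmf_integrable_bounded[where B="real n ^ 2"])
      fix g show "\<bar>Bsum l n g\<bar> \<le> real n ^ 2" using Bsum_bounds[of l n g] by simp
    qed
    have "measure_pmf.expectation (?G n) (Bsum l n) \<le> measure_pmf.expectation (?G n) (\<lambda>g. real n * C)"
    proof (rule integral_mono_AE[OF int1])
      show "integrable (?G n) (\<lambda>g. real n * C)" by simp
      show "AE g in measure_pmf (?G n). Bsum l n g \<le> real n * C"
        unfolding AE_measure_pmf_iff
      proof
        fix g assume g: "g \<in> set_pmf (?G n)"
        show "Bsum l n g \<le> real n * C" unfolding C_def
          by (rule Bsum_det) (use perc_props[OF n D k g _ rho] Psi_pos in auto)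
      qed
    qed
    also have "\<dots> = real n * C" by (simp add: measure_pmf.prob_space)
    finally have E: "measure_pmf.expectation (?G n) (Bsum l n) \<le> real n * C" .
    have "measure_pmf.expectation (?G n) (Bsum l n) / real n ^ 2 \<le> real n * C / real n ^ 2"
      using E by (simp add: divide_right_mono)
    also have "real n * C / real n ^ 2 = C / real n" using n by (simp add: power2_eq_square)
    finally show ?case .
  qed
qed



theorem lemma6:
  fixes d \<epsilon> :: real and k :: nat
    and \<Psi> :: "('o::finite list \<Rightarrow> real) set"
    and \<rho> :: "('o list \<Rightarrow> real) pmf"
    and G :: "nat \<Rightarrow> 'o fgraph pmf"
  assumes d_pos: "d > 0"
    and k: "k \<ge> 3"
    and Psi_fin: "finite \<Psi>" and Psi_ne: "\<Psi> \<noteq> {}"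
    and Psi_pos: "\<And>\<psi> \<tau>. \<psi> \<in> \<Psi> \<Longrightarrow> length \<tau> = k \<Longrightarrow> \<psi> \<tau> > 0"
    and rho: "set_pmf \<rho> \<subseteq> \<Psi>"
    and model: "G = poisson_model d k \<rho>
              \<or> (d \<in> \<nat> \<and> 0 < \<epsilon> \<and> \<epsilon> \<le> 1 \<and> G = perc_reg_model d \<epsilon> k \<rho>)"
    and hyp: "(\<lambda>l. limsup (\<lambda>n. ereal (
                 (1 / real n) * (\<Sum>i<n. \<Sum>\<sigma>\<in>configs n.
                   measure_pmf.expectation (G n) (\<lambda>g.
                     gibbs n g \<sigma> * tv_dist (marg1 n g i) (cond_marg1 n g i (nabla n g l i \<sigma>)))))))
              \<longlonglongrightarrow> 0"
  shows "(\<lambda>n. (1 / real n ^ 2) * (\<Sum>i<n. \<Sum>j<n.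
            measure_pmf.expectation (G n) (\<lambda>g.
              tv_dist (marg2 n g i j) (\<lambda>(\<omega>, \<omega>'). marg1 n g i \<omega> * marg1 n g j \<omega>'))))
         \<longlonglongrightarrow> 0"

proof -
  have k0: "k > 0" using k by simp
  have Pp: "\<forall>\<psi>\<in>\<Psi>. \<forall>\<tau>. length \<tau> = k \<longrightarrow> \<psi> \<tau> > 0" using Psi_pos by blast
  from model show ?thesis
  proof
    assume G: "G = poisson_model d k \<rho>"
    show ?thesis
    proof (rule abstract_limit[OF _ _ hyp])
      show "eventually (\<lambda>n. \<forall>g\<in>set_pmf (G n). wnn n g) sequentially"
        using eventually_gt_at_top[of 0]
      proof eventually_elim
        case (elim n)
        show ?case unfolding G
        proof (intro ballI)
          fix g assume g: "g \<in> set_pmf (poisson_model d k \<rho> n)"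
          show "wnn n g" by (rule poisson_wnn[OF elim g _ rho]) (use Psi_pos in blast)
        qed
      qed
      show "(\<lambda>n. measure_pmf.expectation (G n) (Bsum l n) / real n ^ 2) \<longlonglongrightarrow> 0" for l
        unfolding G by (rule poisson_ballz[OF d_pos k0])
    qed
  next
    assume A: "d \<in> \<nat> \<and> 0 < \<epsilon> \<and> \<epsilon> \<le> 1 \<and> G = perc_reg_model d \<epsilon> k \<rho>"
    then obtain D where dD: "d = real D" by (auto elim: Nats_cases)
    have D0: "D > 0" using d_pos dD by simp
    have G: "G = perc_reg_model (real D) \<epsilon> k \<rho>" using A dD by simp
    show ?thesis
    proof (rule abstract_limit[OF _ _ hyp])
      show "eventually (\<lambda>n. \<forall>g\<in>set_pmf (G n). wnn n g) sequentially"
        using eventually_gt_at_top[of 0]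
      proof eventually_elim
        case (elim n)
        show ?case unfolding G by (intro ballI perc_props(3)[OF elim D0 k0 _ Pp rho])
      qed
      show "(\<lambda>n. measure_pmf.expectation (G n) (Bsum l n) / real n ^ 2) \<longlonglongrightarrow> 0" for l
        unfolding G by (rule perc_ballz[OF D0 k0 _ rho]) (use Psi_pos in blast)
    qed
  qed
qed


end
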